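(* Let $(\rho,u,\Theta,\beta)$ be a smooth solution of the NSME system (with $\rho>0$, $\Theta>0$, $\beta\in\mathcal S$), and let $$S=\rho\Big(\langle m^{-1}\rangle_\beta\big(\log\rho-\log Z(\beta,\Theta)-1-\tfrac n2\big)+\beta\Big).$$ Then $$\partial_tS+\nabla_x\cdot\tilde\phi=-\varepsilon\Big\{\nu|\nabla_x\chi|^2+\kappa\Big|\frac{\nabla_x\Theta}{\Theta}\Big|^2+\frac{\mu}{2\Theta}\sigma(u):\sigma(u)\Big\}\le0,$$ where $$\tilde\phi=Su+\varepsilon\Big\{-\nu\big(\log\rho-\log Z(\beta,\Theta)-1-\tfrac n2\big)\nabla_x\chi+\kappa\frac{\nabla_x\Theta}{\Theta}\Big\}.$$
   Context: Let $n\ge1$, $\varepsilon>0$, $(\gamma_m)_{m\ge1}$ in $[0,\infty)$ with $\mathcal S:=\{\beta:\sum_m\frac{me^{\beta m}}{\gamma_m}<\infty\}\ne\emptyset$; $\langle a_m\rangle_\beta:=\sum_m\frac{me^{\beta m}}{\gamma_m}a_m/\sum_m\frac{me^{\beta m}}{\gamma_m}$; $Z(\beta,\Theta)=(2\pi\Theta)^{n/2}\sum_m\frac{me^{\beta m}}{\gamma_m}$. $\mu=\rho\Theta\langle m^{-1}\rangle_\beta$, $\kappa=\frac{n+2}2\rho\Theta\langle m^{-2}\rangle_\beta$, $\nu=\rho\Theta(\langle m^{-2}\rangle_\beta-\langle m^{-1}\rangle_\beta^2)$; $\sigma(u)=\nabla_xu+(\nabla_xu)^T-\frac2n(\nabla_x\cdot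 u)\mathrm I_n$; $\chi=\log(\rho\Theta/\sum_m\frac{me^{\beta m}}{\gamma_m})$; $A:B=\sum_{ij}A_{ij}B_{ij}$. The NSME system for $(\rho,u,\Theta,\beta)(x,t)$, $x\in\mathbb{R}^n$: $\partial_t(\rho\langle m^{-1}\rangle_\beta)+\nabla_x\cdot(\rho\langle m^{-1}\rangle_\beta u)=\varepsilon\nabla_x\cdot(\nu\nabla_x\chi)$; $\partial_t\rho+\nabla_x\cdot(\rho u)=0$; $\partial_t(\rho u)+\nabla_x\cdot(\rho u\otimes u)+\nabla_x(\rho\Theta\langle m^{-1}\rangle_\beta)=\varepsilon\nabla_x\cdot(\mu\sigma(u))$; $\partial_t(\rho|u|^2+n\rho\Theta\langle m^{-1}\rangle_\beta)+\nabla_x\cdot(\rho|u|^2u+(n+2)\rho\Theta\langle m^{-1}\rangle_\beta u)=\varepsilon\nabla_x\cdot((n+2)\nu\Theta\nabla_x\chi+2\kappa\nabla_x\Theta+2\mu\sigma(u)u)$. *)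

theory Defs
  imports "HOL-Analysis.Analysis"
begin

text \<open>Weights  m e^(beta m) / gamma_m ; the factor real m makes the m = 0 term vanish,
  so sums over all naturals are sums over m >= 1.\<close>

definition wt :: "(nat \<Rightarrow> real) \<Rightarrow> real \<Rightarrow> nat \<Rightarrow> real" where
  "wt \<gamma> b m = real m * exp (b * real m) / \<gamma> m"

text \<open>The set S: the series converges (a term with gamma_m = 0, m >= 1, is +infinity).\<close>
definition Sset :: "(nat \<Rightarrow> real) \<Rightarrow> real set" where
  "Sset \<gamma> = {b. (\<forall>m\<ge>1. \<gamma> m > 0) \<and> summable (wt \<gamma> b)}"

definition Zsum :: "(nat \<Rightarrow> real) \<Rightarrow> real \<Rightarrow> real" where
  "Zsum \<gamma> b = (\<Sum>m. wt \<gamma> b m)"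

definition avg :: "(nat \<Rightarrow> real) \<Rightarrow> real \<Rightarrow> (nat \<Rightarrow> real) \<Rightarrow> real" where
  "avg \<gamma> b a = (\<Sum>m. wt \<gamma> b m * a m) / Zsum \<gamma> b"

definition Zpart :: "nat \<Rightarrow> (nat \<Rightarrow> real) \<Rightarrow> real \<Rightarrow> real \<Rightarrow> real" where
  "Zpart n \<gamma> b \<Theta> = (2 * pi * \<Theta>) powr (real n / 2) * Zsum \<gamma> b"

definition mucoef :: "(nat \<Rightarrow> real) \<Rightarrow> real \<Rightarrow> real \<Rightarrow> real \<Rightarrow> real" where
  "mucoef \<gamma> \<rho> \<Theta> b = \<rho> * \<Theta> * avg \<gamma> b (\<lambda>m. 1 / real m)"

definition kappacoef :: "nat \<Rightarrow> (nat \<Rightarrow> real) \<Rightarrow> real \<Rightarrow> real \<Rightarrow> real \<Rightarrow> real" where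
  "kappacoef n \<gamma> \<rho> \<Theta> b = (real n + 2) / 2 * \<rho> * \<Theta> * avg \<gamma> b (\<lambda>m. 1 / real m ^ 2)"

definition nucoef :: "(nat \<Rightarrow> real) \<Rightarrow> real \<Rightarrow> real \<Rightarrow> real \<Rightarrow> real" where
  "nucoef \<gamma> \<rho> \<Theta> b = \<rho> * \<Theta> *
     (avg \<gamma> b (\<lambda>m. 1 / real m ^ 2) - (avg \<gamma> b (\<lambda>m. 1 / real m)) ^ 2)"

definition chifun :: "(nat \<Rightarrow> real) \<Rightarrow> real \<Rightarrow> real \<Rightarrow> real \<Rightarrow> real" where
  "chifun \<gamma> \<rho> \<Theta> b = ln (\<rho> * \<Theta> / Zsum \<gamma> b)"

definition pt :: "((real ^ 'n) \<times> real \<Rightarrow> 'b::real_normed_vector) \<Rightarrow> (real ^ 'n) \<times> real \<Rightarrow> 'b" where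
  "pt f z = vector_derivative (\<lambda>s. f (fst z, s)) (at (snd z))"

definition px :: "'n::finite \<Rightarrow> ((real ^ 'n) \<times> real \<Rightarrow> 'b::real_normed_vector) \<Rightarrow> (real ^ 'n) \<times> real \<Rightarrow> 'b" where
  "px i f z = vector_derivative (\<lambda>h. f (fst z + h *\<^sub>R axis i 1, snd z)) (at 0)"

definition grad :: "((real ^ 'n::finite) \<times> real \<Rightarrow> real) \<Rightarrow> (real ^ 'n) \<times> real \<Rightarrow> real ^ 'n" where
  "grad f z = (\<chi> i. px i f z)"

definition divg :: "((real ^ 'n::finite) \<times> real \<Rightarrow> real ^ 'n) \<Rightarrow> (real ^ 'n) \<times> real \<Rightarrow> real" where
  "divg F z = (\<Sum>i\<in>UNIV. px i (\<lambda>w. F w $ i) z)"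

definition divM :: "((real ^ 'n::finite) \<times> real \<Rightarrow> real ^ 'n ^ 'n) \<Rightarrow> (real ^ 'n) \<times> real \<Rightarrow> real ^ 'n" where
  "divM A z = (\<chi> i. \<Sum>j\<in>UNIV. px j (\<lambda>w. A w $ i $ j) z)"

definition sigmaM :: "((real ^ 'n::finite) \<times> real \<Rightarrow> real ^ 'n) \<Rightarrow> (real ^ 'n) \<times> real \<Rightarrow> real ^ 'n ^ 'n" where
  "sigmaM u z = (\<chi> i j. px j (\<lambda>w. u w $ i) z + px i (\<lambda>w. u w $ j) z
      - 2 / real CARD('n) * divg u z * (if i = j then 1 else 0))"

definition tensor :: "real ^ 'n::finite \<Rightarrow> real ^ 'n \<Rightarrow> real ^ 'n ^ 'n" where
  "tensor a b = (\<chi> i j. a $ i * b $ j)"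

definition ddot :: "real ^ 'n::finite ^ 'n \<Rightarrow> real ^ 'n ^ 'n \<Rightarrow> real" where
  "ddot A B = (\<Sum>i\<in>UNIV. \<Sum>j\<in>UNIV. A $ i $ j * B $ i $ j)"

fun dd :: "'a::real_normed_vector list \<Rightarrow> ('a \<Rightarrow> 'b::real_normed_vector) \<Rightarrow> 'a \<Rightarrow> 'b" where
  "dd [] f = f"
| "dd (v # vs) f = (\<lambda>z. vector_derivative (\<lambda>h. dd vs f (z + h *\<^sub>R v)) (at 0))"

definition smooth_on :: "'a::real_normed_vector set \<Rightarrow> ('a \<Rightarrow> 'b::real_normed_vector) \<Rightarrow> bool" where
  "smooth_on \<Omega> f \<longleftrightarrow> (\<forall>vs. continuous_on \<Omega> (dd vs f) \<and>
       (\<forall>v. \<forall>z\<in>\<Omega>. (\<lambda>h. dd vs f (z + h *\<^sub>R v)) differentiable (at 0)))"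

definition Lfun :: "nat \<Rightarrow> (nat \<Rightarrow> real) \<Rightarrow> real \<Rightarrow> real \<Rightarrow> real \<Rightarrow> real" where
  "Lfun n \<gamma> \<rho> \<Theta> b = ln \<rho> - ln (Zpart n \<gamma> b \<Theta>) - 1 - real n / 2"

definition Sfun :: "nat \<Rightarrow> (nat \<Rightarrow> real) \<Rightarrow> real \<Rightarrow> real \<Rightarrow> real \<Rightarrow> real" where
  "Sfun n \<gamma> \<rho> \<Theta> b = \<rho> * (avg \<gamma> b (\<lambda>m. 1 / real m) * Lfun n \<gamma> \<rho> \<Theta> b + b)"

definition phifield :: "real \<Rightarrow> (nat \<Rightarrow> real) \<Rightarrow> ((real ^ 'n::finite) \<times> real \<Rightarrow> real)
   \<Rightarrow> ((real ^ 'n) \<times> real \<Rightarrow> real ^ 'n) \<Rightarrow> ((real ^ 'n) \<times> real \<Rightarrow> real)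
   \<Rightarrow> ((real ^ 'n) \<times> real \<Rightarrow> real) \<Rightarrow> (real ^ 'n) \<times> real \<Rightarrow> real ^ 'n" where
  "phifield \<epsilon> \<gamma> \<rho> u \<Theta> \<beta> z =
     (let n = CARD('n);
          L = Lfun n \<gamma> (\<rho> z) (\<Theta> z) (\<beta> z)
      in Sfun n \<gamma> (\<rho> z) (\<Theta> z) (\<beta> z) *\<^sub>R u z
         + \<epsilon> *\<^sub>R ( - (nucoef \<gamma> (\<rho> z) (\<Theta> z) (\<beta> z) * L)
                        *\<^sub>R grad (\<lambda>w. chifun \<gamma> (\<rho> w) (\<Theta> w) (\<beta> w)) z
                  + kappacoef n \<gamma> (\<rho> z) (\<Theta> z) (\<beta> z) *\<^sub>R ((1 / \<Theta> z) *\<^sub>R grad \<Theta> z)))"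

definition NSME :: "real \<Rightarrow> (nat \<Rightarrow> real) \<Rightarrow> ((real ^ 'n::finite) \<times> real) set
   \<Rightarrow> ((real ^ 'n) \<times> real \<Rightarrow> real) \<Rightarrow> ((real ^ 'n) \<times> real \<Rightarrow> real ^ 'n)
   \<Rightarrow> ((real ^ 'n) \<times> real \<Rightarrow> real) \<Rightarrow> ((real ^ 'n) \<times> real \<Rightarrow> real) \<Rightarrow> bool" where
  "NSME \<epsilon> \<gamma> \<Omega> \<rho> u \<Theta> \<beta> \<longleftrightarrow>
    (let n = CARD('n);
         a1 = (\<lambda>z. avg \<gamma> (\<beta> z) (\<lambda>m. 1 / real m));
         \<mu> = (\<lambda>z. mucoef \<gamma> (\<rho> z) (\<Theta> z) (\<beta> z));
         \<kappa> = (\<lambda>z. kappacoef n \<gamma> (\<rho> z) (\<Theta> z) (\<beta> z));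
         \<nu> = (\<lambda>z. nucoef \<gamma> (\<rho> z) (\<Theta> z) (\<beta> z));
         \<chi>f = (\<lambda>z. chifun \<gamma> (\<rho> z) (\<Theta> z) (\<beta> z))
     in \<forall>z\<in>\<Omega>.
       pt (\<lambda>w. \<rho> w * a1 w) z + divg (\<lambda>w. (\<rho> w * a1 w) *\<^sub>R u w) z
         = \<epsilon> * divg (\<lambda>w. \<nu> w *\<^sub>R grad \<chi>f w) z
     \<and> pt \<rho> z + divg (\<lambda>w. \<rho> w *\<^sub>R u w) z = 0
     \<and> pt (\<lambda>w. \<rho> w *\<^sub>R u w) z + divM (\<lambda>w. \<rho> w *\<^sub>R tensor (u w) (u w)) z
         + grad (\<lambda>w. \<rho> w * \<Theta> w * a1 w) z
         = \<epsilon> *\<^sub>R divM (\<lambda>w. \<mu> w *\<^sub>R sigmaM u w) z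
     \<and> pt (\<lambda>w. \<rho> w * (norm (u w))\<^sup>2 + real n * \<rho> w * \<Theta> w * a1 w) z
       + divg (\<lambda>w. (\<rho> w * (norm (u w))\<^sup>2) *\<^sub>R u w
                   + ((real n + 2) * \<rho> w * \<Theta> w * a1 w) *\<^sub>R u w) z
         = \<epsilon> * divg (\<lambda>w. ((real n + 2) * \<nu> w * \<Theta> w) *\<^sub>R grad \<chi>f w
                   + (2 * \<kappa> w) *\<^sub>R grad \<Theta> w + (2 * \<mu> w) *\<^sub>R (sigmaM u w *v u w)) z)"

end

theory Submission
  imports Defs
begin

definition Dv :: "'a::real_normed_vector \<Rightarrow> ('a \<Rightarrow> 'b::real_normed_vector) \<Rightarrow> 'a \<Rightarrow> 'b" where
  "Dv v f z = vector_derivative (\<lambda>h. f (z + h *\<^sub>R v)) (at 0)"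

definition HD :: "'a::real_normed_vector \<Rightarrow> ('a \<Rightarrow> real) \<Rightarrow> 'a \<Rightarrow> real \<Rightarrow> bool" where
  "HD v f z d \<longleftrightarrow> ((\<lambda>h. f (z + h *\<^sub>R v)) has_real_derivative d) (at 0)"

definition HV :: "'a::real_normed_vector \<Rightarrow> ('a \<Rightarrow> 'b::real_normed_vector) \<Rightarrow> 'a \<Rightarrow> 'b \<Rightarrow> bool" where
  "HV v f z d \<longleftrightarrow> ((\<lambda>h. f (z + h *\<^sub>R v)) has_vector_derivative d) (at 0)"

lemma line_ev:
  fixes z v :: "'a::real_normed_vector"
  assumes "open \<Omega>" "z \<in> \<Omega>"
  shows "eventually (\<lambda>h::real. z + h *\<^sub>R v \<in> \<Omega>) (nhds 0)"
proof -
  have "((\<lambda>h::real. z + h *\<^sub>R v) \<longlongrightarrow> z + 0 *\<^sub>R v) (nhds 0)"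
    by (intro tendsto_intros filterlim_ident)
  hence "filterlim (\<lambda>h::real. z + h *\<^sub>R v) (nhds z) (nhds 0)" by simp
  moreover have "eventually (\<lambda>w. w \<in> \<Omega>) (nhds z)"
    using assms eventually_nhds_in_open by blast
  ultimately show ?thesis by (rule eventually_compose_filterlim[rotated])
qed

lemma Dv_cong:
  assumes "open \<Omega>" "z \<in> \<Omega>" "\<And>w. w \<in> \<Omega> \<Longrightarrow> f w = g w"
  shows "Dv v f z = Dv v g z"
  unfolding Dv_def
  apply (rule vector_derivative_cong_eq)
  using line_ev[OF assms(1,2), of v] assms(3) by (auto elim!: eventually_mono)

lemma HD_cong:
  assumes "open \<Omega>" "z \<in> \<Omega>" "\<And>w. w \<in> \<Omega> \<Longrightarrow> f w = g w"
  shows "HD v f z d \<longleftrightarrow> HD v g z d"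
  unfolding HD_def
  apply (rule DERIV_cong_ev)
  using line_ev[OF assms(1,2), of v] assms(3) by (auto elim!: eventually_mono)

lemma HD_Dv: "HD v f z d \<Longrightarrow> Dv v f z = d"
  unfolding HD_def Dv_def has_real_derivative_iff_has_vector_derivative
  by (rule vector_derivative_at)

lemma HV_Dv: "HV v f z d \<Longrightarrow> Dv v f z = d"
  unfolding HV_def Dv_def by (rule vector_derivative_at)

lemma HV_HD: "HV v f z d \<Longrightarrow> HD v f z d"
  unfolding HV_def HD_def has_real_derivative_iff_has_vector_derivative .

lemma HV_comp: "HV v f z d \<Longrightarrow> HD v (\<lambda>w. f w $ k) z (d $ k)"
  unfolding HV_def HD_def has_real_derivative_iff_has_vector_derivative
  by (rule bounded_linear.has_vector_derivative[OF bounded_linear_vec_nth])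

lemma px_Dv: "px i f z = Dv (axis i 1, 0) f z"
  unfolding px_def Dv_def by (cases z) (simp add: scaleR_prod_def)

lemma vd_shift:
  fixes g :: "real \<Rightarrow> 'b::real_normed_vector"
  shows "(g has_vector_derivative D) (at c) \<longleftrightarrow> ((\<lambda>h. g (c + h)) has_vector_derivative D) (at 0)"
proof
  assume "(g has_vector_derivative D) (at c)"
  moreover have "((\<lambda>h. c + h) has_vector_derivative 1) (at (0::real))"
    by (auto intro!: derivative_eq_intros)
  ultimately show "((\<lambda>h. g (c + h)) has_vector_derivative D) (at 0)"
    using vector_diff_chain_at[of "\<lambda>h. c + h" 1 0 g D] by (simp add: o_def)
next
  assume "((\<lambda>h. g (c + h)) has_vector_derivative D) (at 0)"
  moreover have "((\<lambda>s. s - c) has_vector_derivative 1) (at c)"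
    by (auto intro!: derivative_eq_intros)
  ultimately show "(g has_vector_derivative D) (at c)"
    using vector_diff_chain_at[of "\<lambda>s. s - c" 1 c "\<lambda>h. g (c + h)" D] by (simp add: o_def)
qed

lemma pt_Dv: "pt f z = Dv (0, 1) f z"
proof -
  have "pt f z = vector_derivative (\<lambda>h. f (fst z, snd z + h)) (at 0)"
    unfolding pt_def vector_derivative_def using vd_shift[of "\<lambda>s. f (fst z, s)"] by simp
  also have "\<dots> = Dv (0, 1) f z" unfolding Dv_def by (cases z) (simp add: scaleR_prod_def add.commute)
  finally show ?thesis .
qed

lemma dd1: "dd [w] f = Dv w f"
  by (rule ext) (simp add: Dv_def)

lemma smooth_HV0:
  assumes "smooth_on \<Omega> f" "z \<in> \<Omega>"
  shows "HV v f z (Dv v f z)"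
proof -
  have "(\<lambda>h. dd [] f (z + h *\<^sub>R v)) differentiable (at 0)"
    using assms unfolding smooth_on_def by blast
  thus ?thesis unfolding HV_def Dv_def by (simp add: vector_derivative_works[symmetric])
qed

lemma smooth_HV1:
  assumes "smooth_on \<Omega> f" "z \<in> \<Omega>"
  shows "HV v (Dv w f) z (Dv v (Dv w f) z)"
proof -
  have "(\<lambda>h. dd [w] f (z + h *\<^sub>R v)) differentiable (at 0)"
    using assms unfolding smooth_on_def by blast
  thus ?thesis unfolding HV_def Dv_def[of v] dd1 by (simp add: vector_derivative_works[symmetric])
qed

named_theorems HD_rules

lemma HD_eq_rhs: "HD v f z d \<Longrightarrow> d = d' \<Longrightarrow> HD v f z d'" by simp

lemma HD_const[HD_rules]: "HD v (\<lambda>w. c) z 0"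
  unfolding HD_def by simp

lemma HD_add[HD_rules]: "HD v f z a \<Longrightarrow> HD v g z b \<Longrightarrow> HD v (\<lambda>w. f w + g w) z (a + b)"
  unfolding HD_def by (rule derivative_intros)

lemma HD_diff[HD_rules]: "HD v f z a \<Longrightarrow> HD v g z b \<Longrightarrow> HD v (\<lambda>w. f w - g w) z (a - b)"
  unfolding HD_def by (rule derivative_intros)

lemma HD_minus[HD_rules]: "HD v f z a \<Longrightarrow> HD v (\<lambda>w. - f w) z (- a)"
  unfolding HD_def by (rule derivative_intros)

lemma HD_mult[HD_rules]: "HD v f z a \<Longrightarrow> HD v g z b \<Longrightarrow> HD v (\<lambda>w. f w * g w) z (f z * b + a * g z)"
  unfolding HD_def by (auto intro!: derivative_eq_intros)

lemma HD_divide[HD_rules]: "HD v f z a \<Longrightarrow> HD v g z b \<Longrightarrow> g z \<noteq> 0 \<Longrightarrow>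
   HD v (\<lambda>w. f w / g w) z ((a * g z - f z * b) / (g z * g z))"
  unfolding HD_def by (auto intro!: derivative_eq_intros simp: field_simps)

lemma HD_chain: "DERIV F (f z) :> F' \<Longrightarrow> HD v f z d \<Longrightarrow> HD v (\<lambda>w. F (f w)) z (F' * d)"
proof -
  assume a: "DERIV F (f z) :> F'" and b: "HD v f z d"
  from a have a': "DERIV F (f (z + 0 *\<^sub>R v)) :> F'" by simp
  show ?thesis using DERIV_chain2[OF a' b[unfolded HD_def]] unfolding HD_def .
qed

lemma HD_ln[HD_rules]: "HD v f z d \<Longrightarrow> f z > 0 \<Longrightarrow> HD v (\<lambda>w. ln (f w)) z (d / f z)"
proof -
  assume "HD v f z d" "f z > 0"
  moreover have "DERIV ln (f z) :> 1 / f z" using \<open>f z > 0\<close> by (auto intro!: derivative_eq_intros)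
  ultimately show ?thesis using HD_chain[of ln "1 / f z" f z v d] by simp
qed

lemma HD_sum: "finite I \<Longrightarrow> (\<And>i. i \<in> I \<Longrightarrow> HD v (f i) z (d i)) \<Longrightarrow>
    HD v (\<lambda>w. \<Sum>i\<in>I. f i w) z (\<Sum>i\<in>I. d i)"
  unfolding HD_def by (rule DERIV_sum) auto

lemma HD_sum_UNIV[HD_rules]: "(\<And>i. HD v (f i) z (d i)) \<Longrightarrow>
    HD v (\<lambda>w. \<Sum>i\<in>(UNIV::'i::finite set). f i w) z (\<Sum>i\<in>UNIV. d i)"
  by (rule HD_sum) auto

definition E :: "(nat \<Rightarrow> real) \<Rightarrow> real \<Rightarrow> real" where
  "E c b = (\<Sum>m. c m * exp b ^ m)"

definition mc :: "(nat \<Rightarrow> real) \<Rightarrow> nat \<Rightarrow> real" where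
  "mc c = (\<lambda>m. real m * c m)"

definition conv :: "(nat \<Rightarrow> real) \<Rightarrow> real \<Rightarrow> bool" where
  "conv c b \<longleftrightarrow> (\<exists>K. exp b < K \<and> summable (\<lambda>m. c m * K ^ m))"

lemma mc_sums:
  fixes x :: real
  assumes "summable (\<lambda>n. diffs c n * x ^ n)"
  shows "(\<lambda>m. mc c m * x ^ m) sums (x * (\<Sum>n. diffs c n * x ^ n))"
proof -
  have "(\<lambda>n. x * (diffs c n * x ^ n)) sums (x * (\<Sum>n. diffs c n * x ^ n))"
    using sums_mult[OF summable_sums[OF assms]] .
  moreover have "(\<lambda>n. x * (diffs c n * x ^ n)) = (\<lambda>n. mc c (Suc n) * x ^ Suc n)"
    by (auto simp: diffs_def mc_def)
  ultimately have "(\<lambda>n. mc c (Suc n) * x ^ Suc n) sums (x * (\<Sum>n. diffs c n * x ^ n))" by simp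
  from sums_Suc[OF this] show ?thesis by (simp add: mc_def)
qed

lemma conv_props:
  assumes "conv c b"
  shows "DERIV (E c) b :> E (mc c) b" "conv (mc c) b"
proof -
  obtain K where K: "exp b < K" "summable (\<lambda>m. c m * K ^ m)" using assms conv_def by blast
  have Kpos: "0 < K" using K(1) exp_gt_zero[of b] by linarith
  have sm: "\<And>y. norm y < K \<Longrightarrow> summable (\<lambda>m. c m * y ^ m)"
    using powser_inside[OF K(2)] Kpos by simp
  have nx: "norm (exp b) < K" using K(1) by simp
  have d1: "summable (\<lambda>n. diffs c n * exp b ^ n)" by (rule termdiff_converges[OF nx sm])
  have "DERIV (\<lambda>x. \<Sum>n. c n * x ^ n) (exp b) :> (\<Sum>n. diffs c n * exp b ^ n)"
    by (rule termdiffs_strong[OF K(2)]) (use nx Kpos in simp)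
  from DERIV_chain2[OF this DERIV_exp]
  have "DERIV (\<lambda>b. \<Sum>n. c n * exp b ^ n) b :> (\<Sum>n. diffs c n * exp b ^ n) * exp b" .
  moreover have "(\<Sum>n. diffs c n * exp b ^ n) * exp b = E (mc c) b"
    using sums_unique[OF mc_sums[OF d1]] unfolding E_def by (simp add: mult.commute)
  ultimately show "DERIV (E c) b :> E (mc c) b" unfolding E_def[abs_def] by simp
  define K' where "K' = (exp b + K) / 2"
  have K'1: "exp b < K'" "K' < K" using K(1) by (auto simp: K'_def)
  have "norm K' < K" using K'1 exp_gt_zero[of b] unfolding real_norm_def by linarith
  from termdiff_converges[OF this sm]
  have "summable (\<lambda>n. diffs c n * K' ^ n)" .
  from sums_summable[OF mc_sums[OF this]] K'1 show "conv (mc c) b"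
    unfolding conv_def by blast
qed

definition c1 :: "(nat \<Rightarrow> real) \<Rightarrow> nat \<Rightarrow> real" where "c1 \<gamma> m = real m / \<gamma> m"
definition c0 :: "(nat \<Rightarrow> real) \<Rightarrow> nat \<Rightarrow> real" where "c0 \<gamma> m = (if m = 0 then 0 else 1 / \<gamma> m)"
definition cm1 :: "(nat \<Rightarrow> real) \<Rightarrow> nat \<Rightarrow> real" where
  "cm1 \<gamma> m = (if m = 0 then 0 else 1 / (real m * \<gamma> m))"

lemma wt_c1: "wt \<gamma> b m = c1 \<gamma> m * exp b ^ m"
  by (simp add: wt_def c1_def exp_of_nat2_mult[symmetric])

lemma Zsum_E: "Zsum \<gamma> b = E (c1 \<gamma>) b"
  by (simp add: Zsum_def E_def wt_c1)

lemma avg1_E: "avg \<gamma> b (\<lambda>m. 1 / real m) = E (c0 \<gamma>) b / E (c1 \<gamma>) b"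
proof -
  have "\<And>m. wt \<gamma> b m * (1 / real m) = c0 \<gamma> m * exp b ^ m"
    by (simp add: wt_c1 c1_def c0_def)
  thus ?thesis by (simp add: avg_def E_def Zsum_E)
qed

lemma avg2_E: "avg \<gamma> b (\<lambda>m. 1 / real m ^ 2) = E (cm1 \<gamma>) b / E (c1 \<gamma>) b"
proof -
  have "\<And>m. wt \<gamma> b m * (1 / real m ^ 2) = cm1 \<gamma> m * exp b ^ m"
    by (simp add: wt_c1 c1_def cm1_def power2_eq_square)
  thus ?thesis by (simp add: avg_def E_def Zsum_E)
qed

lemma mc_c0: "mc (c0 \<gamma>) = c1 \<gamma>"
  by (rule ext) (simp add: mc_def c0_def c1_def)

lemma mc_cm1: "mc (cm1 \<gamma>) = c0 \<gamma>"
  by (rule ext) (simp add: mc_def c0_def cm1_def)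

lemma int_props:
  assumes "b \<in> interior (Sset \<gamma>)"
  shows "conv (c1 \<gamma>) b" "conv (c0 \<gamma>) b" "conv (cm1 \<gamma>) b" "E (c1 \<gamma>) b > 0"
    "E (c0 \<gamma>) b \<ge> 0" "E (cm1 \<gamma>) b \<ge> 0"
    "E (cm1 \<gamma>) b / E (c1 \<gamma>) b - (E (c0 \<gamma>) b / E (c1 \<gamma>) b)^2 \<ge> 0"
proof -
  obtain e where e: "e > 0" "ball b e \<subseteq> Sset \<gamma>" using assms mem_interior by blast
  have bS: "b \<in> Sset \<gamma>" using assms interior_subset by blast
  have gpos: "\<And>m. m \<ge> 1 \<Longrightarrow> \<gamma> m > 0" using bS by (auto simp: Sset_def)
  have "b + e/2 \<in> ball b e" using e by (simp add: dist_norm)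
  hence "b + e/2 \<in> Sset \<gamma>" using e by blast
  hence sK: "summable (\<lambda>m. c1 \<gamma> m * exp (b + e/2) ^ m)"
    by (simp add: Sset_def wt_c1[abs_def])
  have lt: "exp b < exp (b + e/2)" using e by simp
  show cv1: "conv (c1 \<gamma>) b" using sK lt conv_def by blast
  have c0le: "norm (c0 \<gamma> m * exp (b + e/2) ^ m) \<le> c1 \<gamma> m * exp (b + e/2) ^ m" for m
  proof (cases "m = 0")
    case False
    hence "\<gamma> m > 0" using gpos by simp
    moreover have "1 \<le> real m" using False by simp
    ultimately show ?thesis using False
      by (simp add: c0_def c1_def abs_mult divide_right_mono)
  qed (simp add: c0_def c1_def)
  have cm1le: "norm (cm1 \<gamma> m * exp (b + e/2) ^ m) \<le> c1 \<gamma> m * exp (b + e/2) ^ m" for m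
  proof (cases "m = 0")
    case False
    hence g: "\<gamma> m > 0" using gpos by simp
    have m1: "1 \<le> real m" using False by simp
    have "1 / (real m * \<gamma> m) \<le> real m / \<gamma> m"
      using g m1 by (simp add: field_simps) (metis m1 mult_mono mult_1 less_eq_real_def dual_order.trans mult_le_cancel_right1 zero_le_one)
    hence "1 / (real m * \<gamma> m) * exp (b + e/2) ^ m \<le> real m / \<gamma> m * exp (b + e/2) ^ m"
      by (rule mult_right_mono) simp
    then show ?thesis using False g
      by (simp add: cm1_def c1_def abs_mult)
  qed (simp add: cm1_def c1_def)
  have s0: "summable (\<lambda>m. c0 \<gamma> m * exp (b + e/2) ^ m)"
    by (rule summable_comparison_test[OF _ sK]) (use c0le in auto)
  have s2: "summable (\<lambda>m. cm1 \<gamma> m * exp (b + e/2) ^ m)"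
    by (rule summable_comparison_test[OF _ sK]) (use cm1le in auto)
  show "conv (c0 \<gamma>) b" using s0 lt conv_def by blast
  show "conv (cm1 \<gamma>) b" using s2 lt conv_def by blast
  have nx: "norm (exp b) < norm (exp (b + e/2))" using lt by simp
  have t1: "summable (\<lambda>m. c1 \<gamma> m * exp b ^ m)" by (rule powser_inside[OF sK nx])
  have t0: "summable (\<lambda>m. c0 \<gamma> m * exp b ^ m)" by (rule powser_inside[OF s0 nx])
  have t2: "summable (\<lambda>m. cm1 \<gamma> m * exp b ^ m)" by (rule powser_inside[OF s2 nx])
  have nn1: "c1 \<gamma> m * exp b ^ m \<ge> 0" for m
    using gpos[of m] by (cases "m = 0") (auto simp: c1_def)
  have nn0: "c0 \<gamma> m * exp b ^ m \<ge> 0" for m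
    using gpos[of m] by (cases "m = 0") (auto simp: c0_def)
  have nn2: "cm1 \<gamma> m * exp b ^ m \<ge> 0" for m
    using gpos[of m] by (cases "m = 0") (auto simp: cm1_def)
  have p1: "c1 \<gamma> 1 * exp b ^ 1 > 0" using gpos[of 1] by (simp add: c1_def)
  show Ypos: "E (c1 \<gamma>) b > 0" unfolding E_def by (rule suminf_pos2[OF t1 nn1 p1])
  show "E (c0 \<gamma>) b \<ge> 0" unfolding E_def by (rule suminf_nonneg[OF t0 nn0])
  show "E (cm1 \<gamma>) b \<ge> 0" unfolding E_def by (rule suminf_nonneg[OF t2 nn2])
  define a where "a = E (c0 \<gamma>) b / E (c1 \<gamma>) b"
  define f where "f m = cm1 \<gamma> m * exp b ^ m - 2 * a * (c0 \<gamma> m * exp b ^ m) + a^2 * (c1 \<gamma> m * exp b ^ m)" for m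
  have fe: "f m = (c1 \<gamma> m * exp b ^ m) * (1 / real m - a)^2" for m
    using gpos[of m] by (cases "m = 0") (auto simp: f_def c0_def c1_def cm1_def power2_eq_square field_simps)
  have fnn: "f m \<ge> 0" for m unfolding fe using nn1[of m] by simp
  have sf: "summable f" unfolding f_def[abs_def]
    by (intro summable_add summable_diff summable_mult t0 t1 t2)
  have "f sums (E (cm1 \<gamma>) b - 2 * a * E (c0 \<gamma>) b + a^2 * E (c1 \<gamma>) b)"
    unfolding f_def[abs_def] E_def
    by (intro sums_add sums_diff sums_mult summable_sums t0 t1 t2)
  hence "suminf f = E (cm1 \<gamma>) b - 2 * a * E (c0 \<gamma>) b + a^2 * E (c1 \<gamma>) b"
    by (rule sums_unique[symmetric])
  moreover have "suminf f \<ge> 0" by (rule suminf_nonneg[OF sf fnn])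
  ultimately have "0 \<le> E (cm1 \<gamma>) b - 2 * a * E (c0 \<gamma>) b + a^2 * E (c1 \<gamma>) b" by simp
  also have "\<dots> = E (c1 \<gamma>) b * (E (cm1 \<gamma>) b / E (c1 \<gamma>) b - a^2)"
    using Ypos by (simp add: a_def field_simps power2_eq_square)
  finally show "E (cm1 \<gamma>) b / E (c1 \<gamma>) b - (E (c0 \<gamma>) b / E (c1 \<gamma>) b)^2 \<ge> 0"
    using Ypos by (simp add: a_def zero_le_mult_iff)
qed

lemma core_alg:
  fixes \<rho> \<Theta> \<beta> a1 y L n \<epsilon> \<nu> \<kappa> \<mu> rt tt bt ru thu bu dv Q W UUt Mt sg sk rG thG bG th2 TU s2 :: real
  assumes pos: "\<rho> > 0" "\<Theta> > 0"
    and E2: "rt + ru + \<rho> * dv = 0"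
    and E1: "(rt * a1 + \<rho> * (1 - a1 * y) * bt) + (a1 * ru + \<rho> * (1 - a1 * y) * bu) + \<rho> * a1 * dv = \<epsilon> * sg"
    and EK: "\<rho> * UUt + \<rho> * W + ((ru * \<Theta> + \<rho> * thu) * a1 + \<rho> * \<Theta> * (1 - a1 * y) * bu) = \<epsilon> * Mt"
    and EE: "rt * Q + 2 * \<rho> * UUt + n * ((rt * \<Theta> + \<rho> * tt) * a1 + \<rho> * \<Theta> * (1 - a1 * y) * bt)
        + (ru * Q + 2 * \<rho> * W) + \<rho> * Q * dv
        + (n + 2) * (((ru * \<Theta> + \<rho> * thu) * a1 + \<rho> * \<Theta> * (1 - a1 * y) * bu) + \<rho> * \<Theta> * a1 * dv)
        = \<epsilon> * ((n + 2) * (thG + \<Theta> * sg) + 2 * sk + 2 * Mt + 2 * TU)"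
    and TU: "TU = \<mu> / 2 * s2"
  shows "(rt * (a1 * L + \<beta>) + \<rho> * ((1 - a1 * y) * bt * L + a1 * (rt / \<rho> - n / 2 * tt / \<Theta> - y * bt) + bt))
       + ((a1 * L + \<beta>) * ru + \<rho> * ((1 - a1 * y) * L * bu + a1 * (ru / \<rho> - n / 2 * thu / \<Theta> - y * bu) + bu))
       + \<rho> * (a1 * L + \<beta>) * dv
       + \<epsilon> * (- ((rG / \<rho> - n / 2 * thG / \<Theta> - y * bG) + L * sg) + sk / \<Theta> - \<kappa> * th2 / \<Theta>^2)
     = - \<epsilon> * ((rG / \<rho> + thG / \<Theta> - y * bG) + \<kappa> * th2 / \<Theta>^2 + \<mu> / (2 * \<Theta>) * s2)"
proof -
  define e1 where "e1 = (rt * a1 + \<rho> * (1 - a1 * y) * bt) + (a1 * ru + \<rho> * (1 - a1 * y) * bu) + \<rho> * a1 * dv - \<epsilon> * sg"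
  define e2 where "e2 = rt + ru + \<rho> * dv"
  define ek where "ek = \<rho> * UUt + \<rho> * W + ((ru * \<Theta> + \<rho> * thu) * a1 + \<rho> * \<Theta> * (1 - a1 * y) * bu) - \<epsilon> * Mt"
  define ee where "ee = rt * Q + 2 * \<rho> * UUt + n * ((rt * \<Theta> + \<rho> * tt) * a1 + \<rho> * \<Theta> * (1 - a1 * y) * bt)
        + (ru * Q + 2 * \<rho> * W) + \<rho> * Q * dv
        + (n + 2) * (((ru * \<Theta> + \<rho> * thu) * a1 + \<rho> * \<Theta> * (1 - a1 * y) * bu) + \<rho> * \<Theta> * a1 * dv)
        - \<epsilon> * ((n + 2) * (thG + \<Theta> * sg) + 2 * sk + 2 * Mt + 2 * TU)"
  have z: "e1 = 0" "e2 = 0" "ek = 0" "ee = 0" using E1 E2 EK EE by (simp_all add: e1_def e2_def ek_def ee_def)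
  have "(rt * (a1 * L + \<beta>) + \<rho> * ((1 - a1 * y) * bt * L + a1 * (rt / \<rho> - n / 2 * tt / \<Theta> - y * bt) + bt))
       + ((a1 * L + \<beta>) * ru + \<rho> * ((1 - a1 * y) * L * bu + a1 * (ru / \<rho> - n / 2 * thu / \<Theta> - y * bu) + bu))
       + \<rho> * (a1 * L + \<beta>) * dv
       + \<epsilon> * (- ((rG / \<rho> - n / 2 * thG / \<Theta> - y * bG) + L * sg) + sk / \<Theta> - \<kappa> * th2 / \<Theta>^2)
     - (- \<epsilon> * ((rG / \<rho> + thG / \<Theta> - y * bG) + \<kappa> * th2 / \<Theta>^2 + \<mu> / (2 * \<Theta>) * s2))
     = (L + 1 + n / 2) * e1 + (\<beta> + Q / (2 * \<Theta>)) * e2 + ek / \<Theta> - ee / (2 * \<Theta>)"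
    unfolding e1_def e2_def ek_def ee_def TU using pos
    by (simp add: field_simps)
  thus ?thesis using z by simp
qed

lemma kin_lemma:
  fixes u Ut r P :: "'n::finite \<Rightarrow> real" and U t :: "'n \<Rightarrow> 'n \<Rightarrow> real" and tt :: "'n \<Rightarrow> 'n \<Rightarrow> 'n \<Rightarrow> real"
  assumes mom: "\<And>i. (rt * u i + \<rho> * Ut i) + (\<Sum>j\<in>UNIV. r j * (u i * u j) + \<rho> * (U i j * u j + u i * U j j)) + P i
                 = \<epsilon> * (\<Sum>j\<in>UNIV. tt j i j)"
    and E2: "rt + (\<Sum>j\<in>UNIV. r j * u j + \<rho> * U j j) = 0"
  shows "\<rho> * (\<Sum>i\<in>UNIV. u i * Ut i) + \<rho> * (\<Sum>i\<in>UNIV. \<Sum>j\<in>UNIV. u i * U i j * u j) + (\<Sum>i\<in>UNIV. u i * P i)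
       = \<epsilon> * (\<Sum>i\<in>UNIV. \<Sum>j\<in>UNIV. u i * tt j i j)"
proof -
  have pw: "u i * ((rt * u i + \<rho> * Ut i) + (\<Sum>j\<in>UNIV. r j * (u i * u j) + \<rho> * (U i j * u j + u i * U j j)) + P i)
      = (u i)^2 * (rt + (\<Sum>j\<in>UNIV. r j * u j + \<rho> * U j j)) + (\<rho> * (u i * Ut i) + \<rho> * (\<Sum>j\<in>UNIV. u i * U i j * u j) + u i * P i)" for i
  proof -
    have "u i * (\<Sum>j\<in>UNIV. r j * (u i * u j) + \<rho> * (U i j * u j + u i * U j j))
        = (u i)^2 * (\<Sum>j\<in>UNIV. r j * u j + \<rho> * U j j) + \<rho> * (\<Sum>j\<in>UNIV. u i * U i j * u j)"
      by (simp add: sum_distrib_left flip: sum.distrib) (rule sum.cong, simp_all add: algebra_simps power2_eq_square)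
    thus ?thesis by (simp add: algebra_simps power2_eq_square)
  qed
  have "(\<Sum>i\<in>UNIV. u i * ((rt * u i + \<rho> * Ut i) + (\<Sum>j\<in>UNIV. r j * (u i * u j) + \<rho> * (U i j * u j + u i * U j j)) + P i))
       = (\<Sum>i\<in>UNIV. u i * (\<epsilon> * (\<Sum>j\<in>UNIV. tt j i j)))" using mom by simp
  also have "\<dots> = \<epsilon> * (\<Sum>i\<in>UNIV. \<Sum>j\<in>UNIV. u i * tt j i j)"
    by (simp add: sum_distrib_left algebra_simps)
  finally have "(\<Sum>i\<in>UNIV. \<rho> * (u i * Ut i) + \<rho> * (\<Sum>j\<in>UNIV. u i * U i j * u j) + u i * P i)
      = \<epsilon> * (\<Sum>i\<in>UNIV. \<Sum>j\<in>UNIV. u i * tt j i j)"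
    unfolding pw E2 by simp
  thus ?thesis by (simp add: sum.distrib sum_distrib_left)
qed

lemma swap_lemma:
  fixes u :: "'n::finite \<Rightarrow> real" and t :: "'n \<Rightarrow> 'n \<Rightarrow> 'n \<Rightarrow> real"
  assumes sym: "\<And>d i j. t d i j = t d j i"
  shows "(\<Sum>i\<in>UNIV. \<Sum>j\<in>UNIV. t i i j * u j) = (\<Sum>i\<in>UNIV. \<Sum>j\<in>UNIV. u i * t j i j)"
proof -
  have "(\<Sum>i\<in>UNIV. \<Sum>j\<in>UNIV. u i * t j i j) = (\<Sum>j\<in>UNIV. \<Sum>i\<in>UNIV. u i * t j i j)"
    by (rule sum.swap)
  also have "\<dots> = (\<Sum>j\<in>UNIV. \<Sum>i\<in>UNIV. t j j i * u i)"
    using sym by (simp add: mult.commute)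
  finally show ?thesis by simp
qed

lemma sigma_lemma:
  fixes U :: "'n::finite \<Rightarrow> 'n \<Rightarrow> real"
  defines "dv \<equiv> (\<Sum>k\<in>UNIV. U k k)"
  defines "\<sigma> \<equiv> (\<lambda>i j. U i j + U j i - 2 / real CARD('n) * dv * (if i = j then 1 else 0))"
  shows "(\<Sum>i\<in>UNIV. \<Sum>j\<in>UNIV. (\<mu> * \<sigma> i j) * U j i) = \<mu> / 2 * (\<Sum>i\<in>UNIV. \<Sum>j\<in>UNIV. \<sigma> i j * \<sigma> i j)"
proof -
  have tr: "(\<Sum>i\<in>UNIV. \<sigma> i i) = 0"
    by (simp add: \<sigma>_def sum.distrib sum_subtractf) (simp add: dv_def sum_distrib_left)
  have s1: "(\<Sum>i\<in>UNIV. \<Sum>j\<in>UNIV. \<sigma> i j * U j i) = (\<Sum>i\<in>UNIV. \<Sum>j\<in>UNIV. \<sigma> i j * U i j)"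
  proof -
    have "(\<Sum>i\<in>UNIV. \<Sum>j\<in>UNIV. \<sigma> i j * U j i) = (\<Sum>j\<in>UNIV. \<Sum>i\<in>UNIV. \<sigma> i j * U j i)"
      by (rule sum.swap)
    also have "\<dots> = (\<Sum>j\<in>UNIV. \<Sum>i\<in>UNIV. \<sigma> j i * U j i)"
      by (rule sum.cong[OF refl], rule sum.cong[OF refl]) (auto simp: \<sigma>_def add.commute)
    finally show ?thesis .
  qed
  have "2 * (\<Sum>i\<in>UNIV. \<Sum>j\<in>UNIV. \<sigma> i j * U j i)
      = (\<Sum>i\<in>UNIV. \<Sum>j\<in>UNIV. \<sigma> i j * (U i j + U j i))"
    by (subst mult_2, subst (2) s1) (simp add: sum.distrib[symmetric] distrib_left add.commute)
  also have "\<dots> = (\<Sum>i\<in>UNIV. \<Sum>j\<in>UNIV. \<sigma> i j * \<sigma> i j + 2 / real CARD('n) * dv * (if i = j then \<sigma> i j else 0))"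
  proof (rule sum.cong[OF refl], rule sum.cong[OF refl])
    fix i j
    have "U i j + U j i = \<sigma> i j + 2 / real CARD('n) * dv * (if i = j then 1 else 0)"
      by (simp add: \<sigma>_def)
    thus "\<sigma> i j * (U i j + U j i) = \<sigma> i j * \<sigma> i j + 2 / real CARD('n) * dv * (if i = j then \<sigma> i j else 0)"
      by (simp add: algebra_simps)
  qed
  also have "\<dots> = (\<Sum>i\<in>UNIV. \<Sum>j\<in>UNIV. \<sigma> i j * \<sigma> i j) + 2 / real CARD('n) * dv * (\<Sum>i\<in>UNIV. \<sigma> i i)"
  proof -
    have "\<And>i. (\<Sum>j\<in>UNIV. 2 / real CARD('n) * dv * (if i = j then \<sigma> i j else 0)) = 2 / real CARD('n) * dv * \<sigma> i i"
    proof -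
      fix i
      have d: "(\<Sum>j\<in>UNIV. (if i = j then \<sigma> i j else 0)) = \<sigma> i i" by simp
      show "(\<Sum>j\<in>UNIV. 2 / real CARD('n) * dv * (if i = j then \<sigma> i j else 0)) = 2 / real CARD('n) * dv * \<sigma> i i"
        by (simp only: sum_distrib_left[symmetric] d)
    qed
    thus ?thesis by (simp only: sum.distrib sum_distrib_left[symmetric])
  qed
  finally have "2 * (\<Sum>i\<in>UNIV. \<Sum>j\<in>UNIV. \<sigma> i j * U j i) = (\<Sum>i\<in>UNIV. \<Sum>j\<in>UNIV. \<sigma> i j * \<sigma> i j)"
    using tr by simp
  hence "(\<Sum>i\<in>UNIV. \<Sum>j\<in>UNIV. \<sigma> i j * U j i) = 1/2 * (\<Sum>i\<in>UNIV. \<Sum>j\<in>UNIV. \<sigma> i j * \<sigma> i j)" by simp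
  thus ?thesis by (simp add: sum_distrib_left[symmetric] mult.assoc)
qed

lemma HD_E[HD_rules]: "conv c (f z) \<Longrightarrow> HD v f z d \<Longrightarrow> HD v (\<lambda>w. E c (f w)) z (E (mc c) (f z) * d)"
  by (rule HD_chain[OF conv_props(1)])

definition A1 :: "(nat \<Rightarrow> real) \<Rightarrow> real \<Rightarrow> real" where "A1 \<gamma> b = E (c0 \<gamma>) b / E (c1 \<gamma>) b"
definition yy :: "(nat \<Rightarrow> real) \<Rightarrow> real \<Rightarrow> real" where "yy \<gamma> b = E (mc (c1 \<gamma>)) b / E (c1 \<gamma>) b"

lemma conv_all:
  assumes "b \<in> interior (Sset \<gamma>)"
  shows "conv (c1 \<gamma>) b" "conv (c0 \<gamma>) b" "conv (cm1 \<gamma>) b" "conv (mc (c1 \<gamma>)) b"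
    "conv (mc (mc (c1 \<gamma>))) b" "E (c1 \<gamma>) b \<noteq> 0"
  using int_props[OF assms] conv_props(2) by force+

lemma N_HD:
  assumes "\<beta> x \<in> interior (Sset \<gamma>)" "HD v \<rho> x rv" "HD v \<beta> x bv"
  shows "HD v (\<lambda>w. \<rho> w * avg \<gamma> (\<beta> w) (\<lambda>m. 1 / real m)) x
     (rv * A1 \<gamma> (\<beta> x) + \<rho> x * (1 - A1 \<gamma> (\<beta> x) * yy \<gamma> (\<beta> x)) * bv)"
proof -
  note ip = conv_all[OF assms(1)]
  show ?thesis unfolding avg1_E A1_def yy_def
    apply (rule HD_eq_rhs)
     apply (rule HD_rules assms(2,3) ip)+
    using ip by (simp add: mc_c0 field_simps power2_eq_square)
qed

lemma P_HD:
  assumes "\<beta> x \<in> interior (Sset \<gamma>)" "HD v \<rho> x rv" "HD v \<Theta> x tv" "HD v \<beta> x bv"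
  shows "HD v (\<lambda>w. \<rho> w * \<Theta> w * avg \<gamma> (\<beta> w) (\<lambda>m. 1 / real m)) x
     ((rv * \<Theta> x + \<rho> x * tv) * A1 \<gamma> (\<beta> x) + \<rho> x * \<Theta> x * (1 - A1 \<gamma> (\<beta> x) * yy \<gamma> (\<beta> x)) * bv)"
proof -
  note ip = conv_all[OF assms(1)]
  show ?thesis unfolding avg1_E A1_def yy_def
    apply (rule HD_eq_rhs)
     apply (rule HD_rules assms(2,3,4) ip)+
    using ip by (simp add: mc_c0 field_simps power2_eq_square)
qed

lemma chi_HD:
  assumes "\<beta> x \<in> interior (Sset \<gamma>)" "\<rho> x > 0" "\<Theta> x > 0" "HD v \<rho> x rv" "HD v \<Theta> x tv" "HD v \<beta> x bv"
  shows "HD v (\<lambda>w. chifun \<gamma> (\<rho> w) (\<Theta> w) (\<beta> w)) x (rv / \<rho> x + tv / \<Theta> x - yy \<gamma> (\<beta> x) * bv)"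
proof -
  note ip = conv_all[OF assms(1)]
  have Yp: "E (c1 \<gamma>) (\<beta> x) > 0" using int_props[OF assms(1)] by simp
  have pp: "\<rho> x * \<Theta> x / E (c1 \<gamma>) (\<beta> x) > 0" using Yp assms(2,3) by simp
  show ?thesis unfolding chifun_def Zsum_E yy_def
    apply (rule HD_eq_rhs)
     apply (rule HD_ln)
      apply (rule HD_rules assms(4,5,6) ip)+
     apply (rule pp)
    using ip assms(2,3) Yp by (simp add: field_simps power2_eq_square)
qed

lemma L_eq:
  assumes "\<Theta> > 0" "b \<in> interior (Sset \<gamma>)"
  shows "Lfun n \<gamma> \<rho> \<Theta> b = ln \<rho> - real n / 2 * ln (2 * pi * \<Theta>) - ln (E (c1 \<gamma>) b) - 1 - real n / 2"
proof -
  have Yp: "E (c1 \<gamma>) b > 0" using int_props[OF assms(2)] by simp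
  have "ln (Zpart n \<gamma> b \<Theta>) = real n / 2 * ln (2 * pi * \<Theta>) + ln (E (c1 \<gamma>) b)"
    unfolding Zpart_def Zsum_E using Yp assms(1) by (simp add: ln_mult_pos)
  thus ?thesis unfolding Lfun_def by simp
qed

lemma A1_HD:
  assumes "\<beta> x \<in> interior (Sset \<gamma>)" "HD v \<beta> x bv"
  shows "HD v (\<lambda>w. avg \<gamma> (\<beta> w) (\<lambda>m. 1 / real m)) x ((1 - A1 \<gamma> (\<beta> x) * yy \<gamma> (\<beta> x)) * bv)"
proof -
  note ip = conv_all[OF assms(1)]
  show ?thesis unfolding avg1_E A1_def yy_def
    apply (rule HD_eq_rhs)
     apply (rule HD_rules assms(2) ip)+
    using ip by (simp add: mc_c0 field_simps power2_eq_square)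
qed

lemma coef_HD:
  assumes "\<beta> x \<in> interior (Sset \<gamma>)" "HD v \<rho> x rv" "HD v \<Theta> x tv" "HD v \<beta> x bv"
  shows "\<exists>d. HD v (\<lambda>w. nucoef \<gamma> (\<rho> w) (\<Theta> w) (\<beta> w)) x d"
    "\<exists>d. HD v (\<lambda>w. kappacoef n \<gamma> (\<rho> w) (\<Theta> w) (\<beta> w)) x d"
    "\<exists>d. HD v (\<lambda>w. mucoef \<gamma> (\<rho> w) (\<Theta> w) (\<beta> w)) x d"
proof -
  note ip = conv_all[OF assms(1)]
  show "\<exists>d. HD v (\<lambda>w. nucoef \<gamma> (\<rho> w) (\<Theta> w) (\<beta> w)) x d"
    unfolding nucoef_def avg1_E avg2_E unfolding power2_eq_square
    by (rule exI, (rule HD_rules assms(2,3,4) ip)+)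
  show "\<exists>d. HD v (\<lambda>w. kappacoef n \<gamma> (\<rho> w) (\<Theta> w) (\<beta> w)) x d"
    unfolding kappacoef_def avg1_E avg2_E
    by (rule exI, (rule HD_rules assms(2,3,4) ip)+)
  show "\<exists>d. HD v (\<lambda>w. mucoef \<gamma> (\<rho> w) (\<Theta> w) (\<beta> w)) x d"
    unfolding mucoef_def avg1_E
    by (rule exI, (rule HD_rules assms(2,3,4) ip)+)
qed

context
  fixes \<Omega> :: "'a::real_normed_vector set" and \<rho> \<Theta> \<beta> :: "'a \<Rightarrow> real" and \<gamma> :: "nat \<Rightarrow> real"
  assumes Oo: "open \<Omega>"
    and pos: "\<forall>w\<in>\<Omega>. \<rho> w > 0 \<and> \<Theta> w > 0"
    and bS: "\<forall>w\<in>\<Omega>. \<beta> w \<in> interior (Sset \<gamma>)"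
begin

lemma L_HD:
  assumes "x \<in> \<Omega>" "HD v \<rho> x rv" "HD v \<Theta> x tv" "HD v \<beta> x bv"
  shows "HD v (\<lambda>w. Lfun n \<gamma> (\<rho> w) (\<Theta> w) (\<beta> w)) x (rv / \<rho> x - real n / 2 * tv / \<Theta> x - yy \<gamma> (\<beta> x) * bv)"
proof -
  have bx: "\<beta> x \<in> interior (Sset \<gamma>)" using bS assms(1) by blast
  note ip = conv_all[OF bx]
  have px: "\<rho> x > 0" "\<Theta> x > 0" using pos assms(1) by auto
  have Yp: "E (c1 \<gamma>) (\<beta> x) > 0" using int_props[OF bx] by simp
  have tp: "2 * pi * \<Theta> x > 0" using px by simp
  have hd: "HD v (\<lambda>w. ln (\<rho> w) - real n / 2 * ln (2 * pi * \<Theta> w) - ln (E (c1 \<gamma>) (\<beta> w)) - 1 - real n / 2) x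
      (rv / \<rho> x - real n / 2 * tv / \<Theta> x - yy \<gamma> (\<beta> x) * bv)"
    unfolding yy_def
    apply (rule HD_eq_rhs)
     apply (rule HD_rules assms(2,3,4) ip px Yp tp)+
    apply (simp only: mult_zero_left add_0_right diff_0_right)
    apply (subst mult_divide_mult_cancel_left)
     apply (metis mult_eq_0_iff pi_neq_zero zero_neq_numeral)
    by (simp only: times_divide_eq_right times_divide_eq_left)
  have eqs: "Lfun n \<gamma> (\<rho> w) (\<Theta> w) (\<beta> w) =
      ln (\<rho> w) - real n / 2 * ln (2 * pi * \<Theta> w) - ln (E (c1 \<gamma>) (\<beta> w)) - 1 - real n / 2"
    if "w \<in> \<Omega>" for w
  proof -
    have a: "\<Theta> w > 0" using pos that by blast
    have b: "\<beta> w \<in> interior (Sset \<gamma>)" using bS that by blast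
    show ?thesis by (rule L_eq[OF a b])
  qed
  show ?thesis by (rule iffD2[OF HD_cong[OF Oo assms(1) eqs] hd])
qed

lemma S_HD:
  assumes "x \<in> \<Omega>" "HD v \<rho> x rv" "HD v \<Theta> x tv" "HD v \<beta> x bv"
  shows "HD v (\<lambda>w. Sfun n \<gamma> (\<rho> w) (\<Theta> w) (\<beta> w)) x
    (rv * (A1 \<gamma> (\<beta> x) * Lfun n \<gamma> (\<rho> x) (\<Theta> x) (\<beta> x) + \<beta> x)
     + \<rho> x * ((1 - A1 \<gamma> (\<beta> x) * yy \<gamma> (\<beta> x)) * bv * Lfun n \<gamma> (\<rho> x) (\<Theta> x) (\<beta> x)
       + A1 \<gamma> (\<beta> x) * (rv / \<rho> x - real n / 2 * tv / \<Theta> x - yy \<gamma> (\<beta> x) * bv) + bv))"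
proof -
  have bx: "\<beta> x \<in> interior (Sset \<gamma>)" using bS assms(1) by blast
  note a = A1_HD[OF bx assms(4)] L_HD[OF assms, of n]
  show ?thesis unfolding Sfun_def
    apply (rule HD_eq_rhs)
     apply (rule HD_rules assms(2,3,4) a)+
    by (simp add: avg1_E A1_def[symmetric] algebra_simps)
qed

end

lemma HD_exD: "\<exists>d. HD v f z d \<Longrightarrow> HD v f z (Dv v f z)"
  using HD_Dv by metis

lemma normsq: "(norm (x :: real ^ 'n::finite))\<^sup>2 = (\<Sum>k\<in>UNIV. x $ k * x $ k)"
  by (simp add: power2_norm_eq_inner inner_vec_def)

definition ei :: "'n::finite \<Rightarrow> (real ^ 'n) \<times> real" where "ei i = (axis i 1, 0)"

lemma px_ei: "px i f z = Dv (ei i) f z"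
  by (simp add: px_Dv ei_def)

lemma HD_cong_ex:
  assumes "open \<Omega>" "x \<in> \<Omega>" "\<And>w. w \<in> \<Omega> \<Longrightarrow> f w = g w" "\<exists>d. HD v g x d"
  shows "\<exists>d. HD v f x d"
proof -
  obtain d where "HD v g x d" using assms(4) by blast
  hence "HD v f x d" using HD_cong[OF assms(1,2,3)] by simp
  thus ?thesis by blast
qed

context
  fixes \<Omega> :: "((real ^ 'n::finite) \<times> real) set" and \<rho> \<Theta> \<beta> :: "(real ^ 'n) \<times> real \<Rightarrow> real"
    and u :: "(real ^ 'n) \<times> real \<Rightarrow> real ^ 'n" and \<gamma> :: "nat \<Rightarrow> real"
  assumes Oo: "open \<Omega>"
    and smr: "smooth_on \<Omega> \<rho>" and smu: "smooth_on \<Omega> u" and smt: "smooth_on \<Omega> \<Theta>" and smb: "smooth_on \<Omega> \<beta>"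
    and pos: "\<forall>w\<in>\<Omega>. \<rho> w > 0 \<and> \<Theta> w > 0"
    and bS: "\<forall>w\<in>\<Omega>. \<beta> w \<in> interior (Sset \<gamma>)"
begin

lemma B1: assumes "x \<in> \<Omega>"
  shows "HD v \<rho> x (Dv v \<rho> x)" "HD v \<Theta> x (Dv v \<Theta> x)" "HD v \<beta> x (Dv v \<beta> x)"
    "HD v (\<lambda>w. u w $ k) x (Dv v u x $ k)"
  by (rule HV_HD[OF smooth_HV0[OF smr assms]], rule HV_HD[OF smooth_HV0[OF smt assms]],
      rule HV_HD[OF smooth_HV0[OF smb assms]], rule HV_comp[OF smooth_HV0[OF smu assms]])

lemma B2: assumes "x \<in> \<Omega>"
  shows "HD v (Dv a \<rho>) x (Dv v (Dv a \<rho>) x)" "HD v (Dv a \<Theta>) x (Dv v (Dv a \<Theta>) x)"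
    "HD v (Dv a \<beta>) x (Dv v (Dv a \<beta>) x)"
    "HD v (\<lambda>w. Dv a u w $ k) x (Dv v (Dv a u) x $ k)"
  by (rule HV_HD[OF smooth_HV1[OF smr assms]], rule HV_HD[OF smooth_HV1[OF smt assms]],
      rule HV_HD[OF smooth_HV1[OF smb assms]], rule HV_comp[OF smooth_HV1[OF smu assms]])

lemma pxu: assumes "x \<in> \<Omega>" shows "px i (\<lambda>w. u w $ k) x = Dv (ei i) u x $ k"
  unfolding px_ei by (rule HD_Dv[OF B1(4)[OF assms]])

lemma pxchi: assumes "x \<in> \<Omega>"
  shows "px i (\<lambda>w. chifun \<gamma> (\<rho> w) (\<Theta> w) (\<beta> w)) x
     = Dv (ei i) \<rho> x / \<rho> x + Dv (ei i) \<Theta> x / \<Theta> x - yy \<gamma> (\<beta> x) * Dv (ei i) \<beta> x"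
proof -
  have a: "\<beta> x \<in> interior (Sset \<gamma>)" "\<rho> x > 0" "\<Theta> x > 0" using assms pos bS by blast+
  show ?thesis unfolding px_ei by (rule HD_Dv[OF chi_HD[OF a B1(1,2,3)[OF assms]]])
qed

lemma sig_eq: assumes "x \<in> \<Omega>"
  shows "sigmaM u x $ i $ j = Dv (ei j) u x $ i + Dv (ei i) u x $ j
     - 2 / real CARD('n) * (\<Sum>k\<in>UNIV. Dv (ei k) u x $ k) * (if i = j then 1 else 0)"
  unfolding sigmaM_def divg_def using pxu[OF assms] by simp

lemma coefs_ex: assumes "x \<in> \<Omega>"
  shows "\<exists>d. HD v (\<lambda>w. nucoef \<gamma> (\<rho> w) (\<Theta> w) (\<beta> w)) x d"
    "\<exists>d. HD v (\<lambda>w. kappacoef n \<gamma> (\<rho> w) (\<Theta> w) (\<beta> w)) x d"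
    "\<exists>d. HD v (\<lambda>w. mucoef \<gamma> (\<rho> w) (\<Theta> w) (\<beta> w)) x d"
proof -
  have a: "\<beta> x \<in> interior (Sset \<gamma>)" using assms bS by blast
  show "\<exists>d. HD v (\<lambda>w. nucoef \<gamma> (\<rho> w) (\<Theta> w) (\<beta> w)) x d"
    "\<exists>d. HD v (\<lambda>w. kappacoef n \<gamma> (\<rho> w) (\<Theta> w) (\<beta> w)) x d"
    "\<exists>d. HD v (\<lambda>w. mucoef \<gamma> (\<rho> w) (\<Theta> w) (\<beta> w)) x d"
    using coef_HD[OF a B1(1,2,3)[OF assms]] by blast+
qed

lemma G_ex: assumes "x \<in> \<Omega>"
  shows "\<exists>d. HD v (\<lambda>w. nucoef \<gamma> (\<rho> w) (\<Theta> w) (\<beta> w) * px i (\<lambda>w. chifun \<gamma> (\<rho> w) (\<Theta> w) (\<beta> w)) w) x d"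
proof -
  obtain dn where dn: "HD v (\<lambda>w. nucoef \<gamma> (\<rho> w) (\<Theta> w) (\<beta> w)) x dn" using coefs_ex[OF assms] by blast
  have a: "\<beta> x \<in> interior (Sset \<gamma>)" using assms bS by blast
  note ip = conv_all[OF a]
  have ne: "\<rho> x \<noteq> 0" "\<Theta> x \<noteq> 0" using assms pos by auto
  have hd: "\<exists>d. HD v (\<lambda>w. nucoef \<gamma> (\<rho> w) (\<Theta> w) (\<beta> w) *
     (Dv (ei i) \<rho> w / \<rho> w + Dv (ei i) \<Theta> w / \<Theta> w - E (mc (c1 \<gamma>)) (\<beta> w) / E (c1 \<gamma>) (\<beta> w) * Dv (ei i) \<beta> w)) x d"
    apply (rule exI) apply ((rule HD_rules dn B1[OF assms] B2[OF assms] ip ne)+) done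
  have eqs: "\<And>w. w \<in> \<Omega> \<Longrightarrow> nucoef \<gamma> (\<rho> w) (\<Theta> w) (\<beta> w) * px i (\<lambda>w. chifun \<gamma> (\<rho> w) (\<Theta> w) (\<beta> w)) w
     = nucoef \<gamma> (\<rho> w) (\<Theta> w) (\<beta> w) *
     (Dv (ei i) \<rho> w / \<rho> w + Dv (ei i) \<Theta> w / \<Theta> w - E (mc (c1 \<gamma>)) (\<beta> w) / E (c1 \<gamma>) (\<beta> w) * Dv (ei i) \<beta> w)"
    by (simp add: pxchi yy_def)
  show ?thesis by (rule HD_cong_ex[OF Oo assms eqs hd])
qed

lemma K_ex: assumes "x \<in> \<Omega>"
  shows "\<exists>d. HD v (\<lambda>w. kappacoef n \<gamma> (\<rho> w) (\<Theta> w) (\<beta> w) * px i \<Theta> w) x d"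
proof -
  obtain dn where dn: "HD v (\<lambda>w. kappacoef n \<gamma> (\<rho> w) (\<Theta> w) (\<beta> w)) x dn" using coefs_ex[OF assms] by blast
  show ?thesis unfolding px_ei
    apply (rule exI) apply ((rule HD_rules dn B2[OF assms])+) done
qed

lemma T_ex: assumes "x \<in> \<Omega>"
  shows "\<exists>d. HD v (\<lambda>w. mucoef \<gamma> (\<rho> w) (\<Theta> w) (\<beta> w) * sigmaM u w $ i $ j) x d"
proof -
  obtain dn where dn: "HD v (\<lambda>w. mucoef \<gamma> (\<rho> w) (\<Theta> w) (\<beta> w)) x dn" using coefs_ex[OF assms] by blast
  have hd: "\<exists>d. HD v (\<lambda>w. mucoef \<gamma> (\<rho> w) (\<Theta> w) (\<beta> w) * (Dv (ei j) u w $ i + Dv (ei i) u w $ j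
     - 2 / real CARD('n) * (\<Sum>k\<in>UNIV. Dv (ei k) u w $ k) * (if i = j then 1 else 0))) x d"
    apply (rule exI) apply ((rule HD_rules dn B2[OF assms])+) done
  have eqs: "\<And>w. w \<in> \<Omega> \<Longrightarrow> mucoef \<gamma> (\<rho> w) (\<Theta> w) (\<beta> w) * sigmaM u w $ i $ j
     = mucoef \<gamma> (\<rho> w) (\<Theta> w) (\<beta> w) * (Dv (ei j) u w $ i + Dv (ei i) u w $ j
     - 2 / real CARD('n) * (\<Sum>k\<in>UNIV. Dv (ei k) u w $ k) * (if i = j then 1 else 0))"
    by (simp add: sig_eq)
  show ?thesis by (rule HD_cong_ex[OF Oo assms eqs hd])
qed

end

theorem proposition4p9:
  fixes \<epsilon> :: real and \<gamma> :: "nat \<Rightarrow> real" and \<Omega> :: "((real ^ 'n::finite) \<times> real) set"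
    and \<rho> \<Theta> \<beta> :: "(real ^ 'n) \<times> real \<Rightarrow> real" and u :: "(real ^ 'n) \<times> real \<Rightarrow> real ^ 'n"
  assumes eps: "\<epsilon> > 0"
    and gam: "\<forall>m\<ge>1. \<gamma> m \<ge> 0"
    and Sne: "Sset \<gamma> \<noteq> {}"
    and \<Omega>: "open \<Omega>"
    and sm: "smooth_on \<Omega> \<rho>" "smooth_on \<Omega> u" "smooth_on \<Omega> \<Theta>" "smooth_on \<Omega> \<beta>"
    and pos: "\<forall>z\<in>\<Omega>. \<rho> z > 0 \<and> \<Theta> z > 0"
    and \<beta>S: "\<forall>z\<in>\<Omega>. \<beta> z \<in> interior (Sset \<gamma>)"
    and sol: "NSME \<epsilon> \<gamma> \<Omega> \<rho> u \<Theta> \<beta>"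
  shows "\<forall>z\<in>\<Omega>.
           pt (\<lambda>w. Sfun CARD('n) \<gamma> (\<rho> w) (\<Theta> w) (\<beta> w)) z + divg (phifield \<epsilon> \<gamma> \<rho> u \<Theta> \<beta>) z
             = - \<epsilon> * (nucoef \<gamma> (\<rho> z) (\<Theta> z) (\<beta> z) * (norm (grad (\<lambda>w. chifun \<gamma> (\<rho> w) (\<Theta> w) (\<beta> w)) z))\<^sup>2
                        + kappacoef CARD('n) \<gamma> (\<rho> z) (\<Theta> z) (\<beta> z) * (norm ((1 / \<Theta> z) *\<^sub>R grad \<Theta> z))\<^sup>2
                        + mucoef \<gamma> (\<rho> z) (\<Theta> z) (\<beta> z) / (2 * \<Theta> z) * ddot (sigmaM u z) (sigmaM u z))
         \<and> - \<epsilon> * (nucoef \<gamma> (\<rho> z) (\<Theta> z) (\<beta> z) * (norm (grad (\<lambda>w. chifun \<gamma> (\<rho> w) (\<Theta> w) (\<beta> w)) z))\<^sup>2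
                   + kappacoef CARD('n) \<gamma> (\<rho> z) (\<Theta> z) (\<beta> z) * (norm ((1 / \<Theta> z) *\<^sub>R grad \<Theta> z))\<^sup>2
                   + mucoef \<gamma> (\<rho> z) (\<Theta> z) (\<beta> z) / (2 * \<Theta> z) * ddot (sigmaM u z) (sigmaM u z)) \<le> 0"
proof
  fix z assume zO: "z \<in> \<Omega>"
  note B1z = B1[OF \<Omega> sm(1) sm(2) sm(3) sm(4) pos \<beta>S zO]
  have rz: "\<rho> z > 0" and tz: "\<Theta> z > 0" using pos zO by blast+
  have bz: "\<beta> z \<in> interior (Sset \<gamma>)" using \<beta>S zO by blast
  have sol_z: "pt (\<lambda>w. \<rho> w * avg \<gamma> (\<beta> w) (\<lambda>m. 1 / real m)) z
      + divg (\<lambda>w. (\<rho> w * avg \<gamma> (\<beta> w) (\<lambda>m. 1 / real m)) *\<^sub>R u w) z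
      = \<epsilon> * divg (\<lambda>w. nucoef \<gamma> (\<rho> w) (\<Theta> w) (\<beta> w) *\<^sub>R grad (\<lambda>w. chifun \<gamma> (\<rho> w) (\<Theta> w) (\<beta> w)) w) z
    \<and> pt \<rho> z + divg (\<lambda>w. \<rho> w *\<^sub>R u w) z = 0
    \<and> pt (\<lambda>w. \<rho> w *\<^sub>R u w) z + divM (\<lambda>w. \<rho> w *\<^sub>R tensor (u w) (u w)) z
         + grad (\<lambda>w. \<rho> w * \<Theta> w * avg \<gamma> (\<beta> w) (\<lambda>m. 1 / real m)) z
         = \<epsilon> *\<^sub>R divM (\<lambda>w. mucoef \<gamma> (\<rho> w) (\<Theta> w) (\<beta> w) *\<^sub>R sigmaM u w) z
    \<and> pt (\<lambda>w. \<rho> w * (norm (u w))\<^sup>2 + real CARD('n) * \<rho> w * \<Theta> w * avg \<gamma> (\<beta> w) (\<lambda>m. 1 / real m)) z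
       + divg (\<lambda>w. (\<rho> w * (norm (u w))\<^sup>2) *\<^sub>R u w
                   + ((real CARD('n) + 2) * \<rho> w * \<Theta> w * avg \<gamma> (\<beta> w) (\<lambda>m. 1 / real m)) *\<^sub>R u w) z
         = \<epsilon> * divg (\<lambda>w. ((real CARD('n) + 2) * nucoef \<gamma> (\<rho> w) (\<Theta> w) (\<beta> w) * \<Theta> w) *\<^sub>R grad (\<lambda>w. chifun \<gamma> (\<rho> w) (\<Theta> w) (\<beta> w)) w
                   + (2 * kappacoef CARD('n) \<gamma> (\<rho> w) (\<Theta> w) (\<beta> w)) *\<^sub>R grad \<Theta> w
                   + (2 * mucoef \<gamma> (\<rho> w) (\<Theta> w) (\<beta> w)) *\<^sub>R (sigmaM u w *v u w)) z"
    using sol zO unfolding NSME_def Let_def by blast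
  define et :: "(real^'n) \<times> real" where "et = (0, 1)"
  define nr where "nr = real CARD('n)"
  define a1 where "a1 = A1 \<gamma> (\<beta> z)"
  define y where "y = yy \<gamma> (\<beta> z)"
  define rt where "rt = Dv et \<rho> z"
  define tt where "tt = Dv et \<Theta> z"
  define bt where "bt = Dv et \<beta> z"
  define Ut where "Ut k = Dv et u z $ k" for k
  define r where "r i = Dv (ei i) \<rho> z" for i
  define th where "th i = Dv (ei i) \<Theta> z" for i
  define bb where "bb i = Dv (ei i) \<beta> z" for i
  define U where "U k i = Dv (ei i) u z $ k" for k i
  define uu where "uu k = u z $ k" for k
  define dv where "dv = (\<Sum>i\<in>UNIV. U i i)"
  define ru where "ru = (\<Sum>i\<in>UNIV. r i * uu i)"
  define bu where "bu = (\<Sum>i\<in>UNIV. bb i * uu i)"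
  define thu where "thu = (\<Sum>i\<in>UNIV. th i * uu i)"
  have avgz: "avg \<gamma> (\<beta> z) (\<lambda>m. 1 / real m) = a1" by (simp add: a1_def A1_def avg1_E)
  have HN: "HD v (\<lambda>w. \<rho> w * avg \<gamma> (\<beta> w) (\<lambda>m. 1 / real m)) z
     (Dv v \<rho> z * a1 + \<rho> z * (1 - a1 * y) * Dv v \<beta> z)" for v
    using N_HD[OF bz B1z(1) B1z(3)] unfolding a1_def y_def .
  have Hu: "HD v (\<lambda>w. u w $ k) z (Dv v u z $ k)" for v k by (rule B1z(4))
  have E2: "rt + ru + \<rho> z * dv = 0"
  proof -
    have "pt \<rho> z = rt" unfolding pt_Dv rt_def et_def ..
    moreover have "divg (\<lambda>w. \<rho> w *\<^sub>R u w) z = (\<Sum>i\<in>UNIV. \<rho> z * U i i + r i * uu i)"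
      unfolding divg_def px_ei vector_scaleR_component real_scaleR_def
      by (rule sum.cong[OF refl]) (simp add: HD_Dv[OF HD_mult[OF B1z(1) Hu]] U_def r_def uu_def)
    moreover have "(\<Sum>i\<in>UNIV. \<rho> z * U i i + r i * uu i) = ru + \<rho> z * dv"
      unfolding ru_def dv_def sum_distrib_left sum.distrib by simp
    ultimately show ?thesis using sol_z by simp
  qed
  define G where "G i w = nucoef \<gamma> (\<rho> w) (\<Theta> w) (\<beta> w) * px i (\<lambda>w. chifun \<gamma> (\<rho> w) (\<Theta> w) (\<beta> w)) w" for i w
  define K where "K i w = kappacoef CARD('n) \<gamma> (\<rho> w) (\<Theta> w) (\<beta> w) * px i \<Theta> w" for i w
  define T where "T i j w = mucoef \<gamma> (\<rho> w) (\<Theta> w) (\<beta> w) * sigmaM u w $ i $ j" for i j w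
  define g where "g i = Dv (ei i) (G i) z" for i
  define k where "k i = Dv (ei i) (K i) z" for i
  define t where "t d i j = Dv (ei d) (T i j) z" for d i j
  define sg where "sg = (\<Sum>i\<in>UNIV. g i)"
  have HG: "HD (ei i) (G i) z (g i)" for i
    unfolding g_def G_def by (rule HD_exD[OF G_ex[OF \<Omega> sm(1) sm(2) sm(3) sm(4) pos \<beta>S zO]])
  have HK: "HD (ei i) (K i) z (k i)" for i
    unfolding k_def K_def by (rule HD_exD[OF K_ex[OF \<Omega> sm(1) sm(2) sm(3) sm(4) pos \<beta>S zO]])
  have HT: "HD (ei d) (T i j) z (t d i j)" for d i j
    unfolding t_def T_def by (rule HD_exD[OF T_ex[OF \<Omega> sm(1) sm(2) sm(3) sm(4) pos \<beta>S zO]])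
  have E1: "(rt * a1 + \<rho> z * (1 - a1 * y) * bt) + (a1 * ru + \<rho> z * (1 - a1 * y) * bu) + \<rho> z * a1 * dv = \<epsilon> * sg"
  proof -
    have "pt (\<lambda>w. \<rho> w * avg \<gamma> (\<beta> w) (\<lambda>m. 1 / real m)) z = rt * a1 + \<rho> z * (1 - a1 * y) * bt"
      unfolding pt_Dv et_def[symmetric] rt_def bt_def by (rule HD_Dv[OF HN])
    moreover have "divg (\<lambda>w. (\<rho> w * avg \<gamma> (\<beta> w) (\<lambda>m. 1 / real m)) *\<^sub>R u w) z
        = (\<Sum>i\<in>UNIV. \<rho> z * a1 * U i i + (r i * a1 + \<rho> z * (1 - a1 * y) * bb i) * uu i)"
      unfolding divg_def px_ei vector_scaleR_component real_scaleR_def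
      by (rule sum.cong[OF refl]) (simp add: HD_Dv[OF HD_mult[OF HN Hu]] avgz U_def r_def bb_def uu_def)
    moreover have "(\<Sum>i\<in>UNIV. \<rho> z * a1 * U i i + (r i * a1 + \<rho> z * (1 - a1 * y) * bb i) * uu i)
        = (a1 * ru + \<rho> z * (1 - a1 * y) * bu) + \<rho> z * a1 * dv"
      unfolding ru_def bu_def dv_def sum_distrib_left sum.distrib[symmetric]
      by (rule sum.cong[OF refl]) (simp add: algebra_simps)
    moreover have "divg (\<lambda>w. nucoef \<gamma> (\<rho> w) (\<Theta> w) (\<beta> w) *\<^sub>R grad (\<lambda>w. chifun \<gamma> (\<rho> w) (\<Theta> w) (\<beta> w)) w) z = sg"
      unfolding divg_def sg_def g_def G_def grad_def vector_scaleR_component real_scaleR_def vec_lambda_beta px_ei ..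
    ultimately show ?thesis using sol_z by simp
  qed
  define P where "P i = (r i * \<Theta> z + \<rho> z * th i) * a1 + \<rho> z * \<Theta> z * (1 - a1 * y) * bb i" for i
  define UUt where "UUt = (\<Sum>i\<in>UNIV. uu i * Ut i)"
  define W where "W = (\<Sum>i\<in>UNIV. \<Sum>j\<in>UNIV. uu i * U i j * uu j)"
  define Mt where "Mt = (\<Sum>i\<in>UNIV. \<Sum>j\<in>UNIV. uu i * t j i j)"
  have HP: "HD v (\<lambda>w. \<rho> w * \<Theta> w * avg \<gamma> (\<beta> w) (\<lambda>m. 1 / real m)) z
     ((Dv v \<rho> z * \<Theta> z + \<rho> z * Dv v \<Theta> z) * a1 + \<rho> z * \<Theta> z * (1 - a1 * y) * Dv v \<beta> z)" for v
    using P_HD[OF bz B1z(1) B1z(2) B1z(3)] unfolding a1_def y_def .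
  have HVru: "HV v (\<lambda>w. \<rho> w *\<^sub>R u w) z (\<rho> z *\<^sub>R Dv v u z + Dv v \<rho> z *\<^sub>R u z)" for v
    using has_vector_derivative_scaleR[OF B1z(1)[unfolded HD_def] smooth_HV0[OF sm(2) zO, unfolded HV_def]]
    unfolding HV_def by simp
  have mom: "(rt * uu i + \<rho> z * Ut i) + (\<Sum>j\<in>UNIV. r j * (uu i * uu j) + \<rho> z * (U i j * uu j + uu i * U j j)) + P i
       = \<epsilon> * (\<Sum>j\<in>UNIV. t j i j)" for i
  proof -
    have V: "pt (\<lambda>w. \<rho> w *\<^sub>R u w) z + divM (\<lambda>w. \<rho> w *\<^sub>R tensor (u w) (u w)) z
         + grad (\<lambda>w. \<rho> w * \<Theta> w * avg \<gamma> (\<beta> w) (\<lambda>m. 1 / real m)) z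
         = \<epsilon> *\<^sub>R divM (\<lambda>w. mucoef \<gamma> (\<rho> w) (\<Theta> w) (\<beta> w) *\<^sub>R sigmaM u w) z"
      using sol_z by blast
    have c1: "pt (\<lambda>w. \<rho> w *\<^sub>R u w) z $ i = rt * uu i + \<rho> z * Ut i"
      unfolding pt_Dv et_def[symmetric] HV_Dv[OF HVru] by (simp add: rt_def uu_def Ut_def)
    have c2: "divM (\<lambda>w. \<rho> w *\<^sub>R tensor (u w) (u w)) z $ i
        = (\<Sum>j\<in>UNIV. r j * (uu i * uu j) + \<rho> z * (U i j * uu j + uu i * U j j))"
      unfolding divM_def vec_lambda_beta vector_scaleR_component real_scaleR_def tensor_def px_ei
      by (rule sum.cong[OF refl]) (simp add: HD_Dv[OF HD_mult[OF B1z(1) HD_mult[OF Hu Hu]]] U_def r_def uu_def algebra_simps)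
    have c3: "grad (\<lambda>w. \<rho> w * \<Theta> w * avg \<gamma> (\<beta> w) (\<lambda>m. 1 / real m)) z $ i = P i"
      unfolding grad_def vec_lambda_beta px_ei HD_Dv[OF HP] P_def r_def th_def bb_def ..
    have c4: "(\<epsilon> *\<^sub>R divM (\<lambda>w. mucoef \<gamma> (\<rho> w) (\<Theta> w) (\<beta> w) *\<^sub>R sigmaM u w) z) $ i = \<epsilon> * (\<Sum>j\<in>UNIV. t j i j)"
      unfolding divM_def vec_lambda_beta vector_scaleR_component real_scaleR_def px_ei t_def T_def ..
    show ?thesis using arg_cong[OF V, of "\<lambda>v. v $ i"] c1 c2 c3 c4 by simp
  qed
  have E2': "rt + (\<Sum>j\<in>UNIV. r j * uu j + \<rho> z * U j j) = 0"
    using E2 unfolding ru_def dv_def sum_distrib_left sum.distrib by simp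
  have EK: "\<rho> z * UUt + \<rho> z * W + ((ru * \<Theta> z + \<rho> z * thu) * a1 + \<rho> z * \<Theta> z * (1 - a1 * y) * bu) = \<epsilon> * Mt"
  proof -
    have "(\<Sum>i\<in>UNIV. uu i * P i) = (ru * \<Theta> z + \<rho> z * thu) * a1 + \<rho> z * \<Theta> z * (1 - a1 * y) * bu"
      unfolding ru_def thu_def bu_def P_def sum_distrib_left sum_distrib_right sum.distrib[symmetric]
      by (rule sum.cong[OF refl]) (simp add: algebra_simps)
    thus ?thesis using kin_lemma[of rt uu "\<rho> z" Ut r U P \<epsilon> t, OF mom E2'] unfolding UUt_def W_def Mt_def by simp
  qed
  define Q where "Q = (\<Sum>k\<in>UNIV. uu k * uu k)"
  define thG where "thG = (\<Sum>i\<in>UNIV. th i * G i z)"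
  define sk where "sk = (\<Sum>i\<in>UNIV. k i)"
  define TU where "TU = (\<Sum>i\<in>UNIV. \<Sum>j\<in>UNIV. T i j z * U j i)"
  define pt0 where "pt0 = (rt * \<Theta> z + \<rho> z * tt) * a1 + \<rho> z * \<Theta> z * (1 - a1 * y) * bt"
  have HQ: "HD v (\<lambda>w. \<Sum>k\<in>UNIV. u w $ k * u w $ k) z (\<Sum>k\<in>UNIV. u z $ k * Dv v u z $ k + Dv v u z $ k * u z $ k)" for v
    by (rule HD_sum_UNIV, rule HD_mult[OF Hu Hu])
  have sq2: "(\<Sum>k\<in>UNIV. u z $ k * Dv v u z $ k + Dv v u z $ k * u z $ k) = 2 * (\<Sum>k\<in>UNIV. u z $ k * Dv v u z $ k)" for v
    unfolding sum_distrib_left by (rule sum.cong[OF refl]) simp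
  have EE: "rt * Q + 2 * \<rho> z * UUt + nr * pt0
        + (ru * Q + 2 * \<rho> z * W) + \<rho> z * Q * dv
        + (nr + 2) * (((ru * \<Theta> z + \<rho> z * thu) * a1 + \<rho> z * \<Theta> z * (1 - a1 * y) * bu) + \<rho> z * \<Theta> z * a1 * dv)
        = \<epsilon> * ((nr + 2) * (thG + \<Theta> z * sg) + 2 * sk + 2 * Mt + 2 * TU)"
  proof -
    have V: "pt (\<lambda>w. \<rho> w * (norm (u w))\<^sup>2 + real CARD('n) * \<rho> w * \<Theta> w * avg \<gamma> (\<beta> w) (\<lambda>m. 1 / real m)) z
       + divg (\<lambda>w. (\<rho> w * (norm (u w))\<^sup>2) *\<^sub>R u w
                   + ((real CARD('n) + 2) * \<rho> w * \<Theta> w * avg \<gamma> (\<beta> w) (\<lambda>m. 1 / real m)) *\<^sub>R u w) z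
         = \<epsilon> * divg (\<lambda>w. ((real CARD('n) + 2) * nucoef \<gamma> (\<rho> w) (\<Theta> w) (\<beta> w) * \<Theta> w) *\<^sub>R grad (\<lambda>w. chifun \<gamma> (\<rho> w) (\<Theta> w) (\<beta> w)) w
                   + (2 * kappacoef CARD('n) \<gamma> (\<rho> w) (\<Theta> w) (\<beta> w)) *\<^sub>R grad \<Theta> w
                   + (2 * mucoef \<gamma> (\<rho> w) (\<Theta> w) (\<beta> w)) *\<^sub>R (sigmaM u w *v u w)) z"
      using sol_z by blast
    have f1: "(\<lambda>w. \<rho> w * (norm (u w))\<^sup>2 + real CARD('n) * \<rho> w * \<Theta> w * avg \<gamma> (\<beta> w) (\<lambda>m. 1 / real m))
        = (\<lambda>w. \<rho> w * (\<Sum>k\<in>UNIV. u w $ k * u w $ k) + nr * (\<rho> w * \<Theta> w * avg \<gamma> (\<beta> w) (\<lambda>m. 1 / real m)))"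
      by (simp add: normsq nr_def mult.assoc)
    have c1: "pt (\<lambda>w. \<rho> w * (norm (u w))\<^sup>2 + real CARD('n) * \<rho> w * \<Theta> w * avg \<gamma> (\<beta> w) (\<lambda>m. 1 / real m)) z
        = rt * Q + 2 * \<rho> z * UUt + nr * pt0"
      unfolding f1 pt_Dv et_def[symmetric] HD_Dv[OF HD_add[OF HD_mult[OF B1z(1) HQ] HD_mult[OF HD_const HP]]] sq2
      by (simp add: rt_def Q_def UUt_def uu_def Ut_def pt0_def tt_def bt_def)
    have f2: "(\<lambda>w. ((\<rho> w * (norm (u w))\<^sup>2) *\<^sub>R u w
                   + ((real CARD('n) + 2) * \<rho> w * \<Theta> w * avg \<gamma> (\<beta> w) (\<lambda>m. 1 / real m)) *\<^sub>R u w) $ i)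
        = (\<lambda>w. \<rho> w * (\<Sum>k\<in>UNIV. u w $ k * u w $ k) * u w $ i + (nr + 2) * (\<rho> w * \<Theta> w * avg \<gamma> (\<beta> w) (\<lambda>m. 1 / real m)) * u w $ i)" for i
      by (simp add: normsq nr_def mult.assoc)
    have c2i: "Dv (ei i) (\<lambda>w. \<rho> w * (\<Sum>k\<in>UNIV. u w $ k * u w $ k) * u w $ i + (nr + 2) * (\<rho> w * \<Theta> w * avg \<gamma> (\<beta> w) (\<lambda>m. 1 / real m)) * u w $ i) z
        = (r i * Q + 2 * \<rho> z * (\<Sum>k\<in>UNIV. uu k * U k i)) * uu i + \<rho> z * Q * U i i + (nr + 2) * (P i * uu i + \<rho> z * \<Theta> z * a1 * U i i)" for i
      unfolding HD_Dv[OF HD_add[OF HD_mult[OF HD_mult[OF B1z(1) HQ] Hu] HD_mult[OF HD_mult[OF HD_const HP] Hu]]] sq2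
      by (simp add: r_def Q_def uu_def U_def P_def th_def bb_def avgz algebra_simps)
    have W': "(\<Sum>i\<in>UNIV. (\<Sum>k\<in>UNIV. uu k * U k i) * uu i) = W"
    proof -
      have "(\<Sum>i\<in>UNIV. (\<Sum>k\<in>UNIV. uu k * U k i) * uu i) = (\<Sum>i\<in>UNIV. \<Sum>k\<in>UNIV. uu k * U k i * uu i)"
        by (simp add: sum_distrib_right)
      also have "\<dots> = (\<Sum>k\<in>UNIV. \<Sum>i\<in>UNIV. uu k * U k i * uu i)" by (rule sum.swap)
      finally show ?thesis unfolding W_def .
    qed
    have c2: "divg (\<lambda>w. (\<rho> w * (norm (u w))\<^sup>2) *\<^sub>R u w
                   + ((real CARD('n) + 2) * \<rho> w * \<Theta> w * avg \<gamma> (\<beta> w) (\<lambda>m. 1 / real m)) *\<^sub>R u w) z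
       = (ru * Q + 2 * \<rho> z * W) + \<rho> z * Q * dv
        + (nr + 2) * (((ru * \<Theta> z + \<rho> z * thu) * a1 + \<rho> z * \<Theta> z * (1 - a1 * y) * bu) + \<rho> z * \<Theta> z * a1 * dv)"
    proof -
      have sP: "(\<Sum>i\<in>UNIV. P i * uu i) = (ru * \<Theta> z + \<rho> z * thu) * a1 + \<rho> z * \<Theta> z * (1 - a1 * y) * bu"
        unfolding ru_def thu_def bu_def P_def sum_distrib_left sum_distrib_right sum.distrib[symmetric]
        by (rule sum.cong[OF refl]) (simp add: algebra_simps)
      have "divg (\<lambda>w. (\<rho> w * (norm (u w))\<^sup>2) *\<^sub>R u w
                   + ((real CARD('n) + 2) * \<rho> w * \<Theta> w * avg \<gamma> (\<beta> w) (\<lambda>m. 1 / real m)) *\<^sub>R u w) z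
          = (\<Sum>i\<in>UNIV. (r i * Q + 2 * \<rho> z * (\<Sum>k\<in>UNIV. uu k * U k i)) * uu i + \<rho> z * Q * U i i + (nr + 2) * (P i * uu i + \<rho> z * \<Theta> z * a1 * U i i))"
        unfolding divg_def px_ei f2 c2i ..
      also have "\<dots> = ru * Q + 2 * \<rho> z * (\<Sum>i\<in>UNIV. (\<Sum>k\<in>UNIV. uu k * U k i) * uu i) + \<rho> z * Q * dv
          + (nr + 2) * ((\<Sum>i\<in>UNIV. P i * uu i) + \<rho> z * \<Theta> z * a1 * dv)"
        unfolding ru_def dv_def sum_distrib_left sum_distrib_right sum.distrib[symmetric]
        by (rule sum.cong[OF refl]) (simp add: algebra_simps sum_distrib_left)
      finally show ?thesis unfolding W' sP .
    qed
    have f3: "(\<lambda>w. (((real CARD('n) + 2) * nucoef \<gamma> (\<rho> w) (\<Theta> w) (\<beta> w) * \<Theta> w) *\<^sub>R grad (\<lambda>w. chifun \<gamma> (\<rho> w) (\<Theta> w) (\<beta> w)) w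
                   + (2 * kappacoef CARD('n) \<gamma> (\<rho> w) (\<Theta> w) (\<beta> w)) *\<^sub>R grad \<Theta> w
                   + (2 * mucoef \<gamma> (\<rho> w) (\<Theta> w) (\<beta> w)) *\<^sub>R (sigmaM u w *v u w)) $ i)
        = (\<lambda>w. (nr + 2) * \<Theta> w * G i w + 2 * K i w + 2 * (\<Sum>j\<in>UNIV. T i j w * u w $ j))" for i
      by (simp add: grad_def matrix_vector_mult_def G_def K_def T_def nr_def sum_distrib_left mult.assoc mult.left_commute)
    have c3i: "Dv (ei i) (\<lambda>w. (nr + 2) * \<Theta> w * G i w + 2 * K i w + 2 * (\<Sum>j\<in>UNIV. T i j w * u w $ j)) z
       = (nr + 2) * (th i * G i z + \<Theta> z * g i) + 2 * k i + 2 * (\<Sum>j\<in>UNIV. t i i j * uu j + T i j z * U j i)" for i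
      unfolding HD_Dv[OF HD_add[OF HD_add[OF HD_mult[OF HD_mult[OF HD_const B1z(2)] HG] HD_mult[OF HD_const HK]]
         HD_mult[OF HD_const HD_sum_UNIV[OF HD_mult[OF HT Hu]]]]]
      by (simp add: th_def uu_def U_def algebra_simps)
    have tsym: "t d i j = t d j i" for d i j
    proof -
      have "T i j = T j i" unfolding T_def sigmaM_def by (rule ext) (auto simp: add.commute)
      thus ?thesis unfolding t_def by simp
    qed
    have c3: "divg (\<lambda>w. ((real CARD('n) + 2) * nucoef \<gamma> (\<rho> w) (\<Theta> w) (\<beta> w) * \<Theta> w) *\<^sub>R grad (\<lambda>w. chifun \<gamma> (\<rho> w) (\<Theta> w) (\<beta> w)) w
                   + (2 * kappacoef CARD('n) \<gamma> (\<rho> w) (\<Theta> w) (\<beta> w)) *\<^sub>R grad \<Theta> w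
                   + (2 * mucoef \<gamma> (\<rho> w) (\<Theta> w) (\<beta> w)) *\<^sub>R (sigmaM u w *v u w)) z
        = (nr + 2) * (thG + \<Theta> z * sg) + 2 * sk + 2 * Mt + 2 * TU"
    proof -
      have "divg (\<lambda>w. ((real CARD('n) + 2) * nucoef \<gamma> (\<rho> w) (\<Theta> w) (\<beta> w) * \<Theta> w) *\<^sub>R grad (\<lambda>w. chifun \<gamma> (\<rho> w) (\<Theta> w) (\<beta> w)) w
                   + (2 * kappacoef CARD('n) \<gamma> (\<rho> w) (\<Theta> w) (\<beta> w)) *\<^sub>R grad \<Theta> w
                   + (2 * mucoef \<gamma> (\<rho> w) (\<Theta> w) (\<beta> w)) *\<^sub>R (sigmaM u w *v u w)) z
          = (\<Sum>i\<in>UNIV. (nr + 2) * (th i * G i z + \<Theta> z * g i) + 2 * k i + 2 * (\<Sum>j\<in>UNIV. t i i j * uu j + T i j z * U j i))"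
        unfolding divg_def px_ei f3 c3i ..
      also have "\<dots> = (nr + 2) * (thG + \<Theta> z * sg) + 2 * sk + 2 * (\<Sum>i\<in>UNIV. \<Sum>j\<in>UNIV. t i i j * uu j) + 2 * TU"
        unfolding thG_def sg_def sk_def TU_def sum.distrib sum_distrib_left[symmetric] by (simp add: algebra_simps)
      finally show ?thesis using swap_lemma[of t uu, OF tsym] unfolding Mt_def by simp
    qed
    show ?thesis using V c1 c2 c3 by simp
  qed
  define \<nu> where "\<nu> = nucoef \<gamma> (\<rho> z) (\<Theta> z) (\<beta> z)"
  define \<kappa> where "\<kappa> = kappacoef CARD('n) \<gamma> (\<rho> z) (\<Theta> z) (\<beta> z)"
  define \<mu> where "\<mu> = mucoef \<gamma> (\<rho> z) (\<Theta> z) (\<beta> z)"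
  define L where "L = Lfun CARD('n) \<gamma> (\<rho> z) (\<Theta> z) (\<beta> z)"
  define \<sigma> where "\<sigma> i j = U i j + U j i - 2 / real CARD('n) * (\<Sum>k\<in>UNIV. U k k) * (if i = j then 1 else 0)" for i j
  define s2 where "s2 = (\<Sum>i\<in>UNIV. \<Sum>j\<in>UNIV. \<sigma> i j * \<sigma> i j)"
  define rG where "rG = (\<Sum>i\<in>UNIV. r i * G i z)"
  define bG where "bG = (\<Sum>i\<in>UNIV. bb i * G i z)"
  define th2 where "th2 = (\<Sum>i\<in>UNIV. th i * th i)"
  have sigz: "sigmaM u z $ i $ j = \<sigma> i j" for i j
    unfolding sig_eq[OF \<Omega> sm(1) sm(2) sm(3) sm(4) pos \<beta>S zO] \<sigma>_def U_def ..
  have chiz: "px i (\<lambda>w. chifun \<gamma> (\<rho> w) (\<Theta> w) (\<beta> w)) z = r i / \<rho> z + th i / \<Theta> z - y * bb i" for i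
    unfolding pxchi[OF \<Omega> sm(1) sm(2) sm(3) sm(4) pos \<beta>S zO] r_def th_def bb_def y_def ..
  have Gz: "G i z = \<nu> * (r i / \<rho> z + th i / \<Theta> z - y * bb i)" for i
    unfolding G_def chiz \<nu>_def ..
  have Kz: "K i z = \<kappa> * th i" for i unfolding K_def px_ei th_def \<kappa>_def ..
  have TU: "TU = \<mu> / 2 * s2"
  proof -
    have "TU = (\<Sum>i\<in>UNIV. \<Sum>j\<in>UNIV. (\<mu> * \<sigma> i j) * U j i)"
      unfolding TU_def T_def sigz \<mu>_def ..
    also have "\<dots> = \<mu> / 2 * s2" unfolding s2_def \<sigma>_def by (rule sigma_lemma)
    finally show ?thesis .
  qed
  have HS: "HD v (\<lambda>w. Sfun CARD('n) \<gamma> (\<rho> w) (\<Theta> w) (\<beta> w)) z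
    (Dv v \<rho> z * (a1 * L + \<beta> z)
     + \<rho> z * ((1 - a1 * y) * Dv v \<beta> z * L
       + a1 * (Dv v \<rho> z / \<rho> z - nr / 2 * Dv v \<Theta> z / \<Theta> z - y * Dv v \<beta> z) + Dv v \<beta> z))" for v
    using S_HD[OF \<Omega> pos \<beta>S zO B1z(1) B1z(2) B1z(3), where n="CARD('n)"] unfolding a1_def y_def L_def nr_def .
  have HL: "HD v (\<lambda>w. Lfun CARD('n) \<gamma> (\<rho> w) (\<Theta> w) (\<beta> w)) z
    (Dv v \<rho> z / \<rho> z - nr / 2 * Dv v \<Theta> z / \<Theta> z - y * Dv v \<beta> z)" for v
    using L_HD[OF \<Omega> pos \<beta>S zO B1z(1) B1z(2) B1z(3), where n="CARD('n)"] unfolding y_def nr_def .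
  have tne: "\<Theta> z \<noteq> 0" using tz by simp
  have rne: "\<rho> z \<noteq> 0" using rz by simp
  have Sz: "Sfun CARD('n) \<gamma> (\<rho> z) (\<Theta> z) (\<beta> z) = \<rho> z * (a1 * L + \<beta> z)"
    unfolding Sfun_def avgz L_def ..
  have g1: "pt (\<lambda>w. Sfun CARD('n) \<gamma> (\<rho> w) (\<Theta> w) (\<beta> w)) z
     = rt * (a1 * L + \<beta> z) + \<rho> z * ((1 - a1 * y) * bt * L + a1 * (rt / \<rho> z - nr / 2 * tt / \<Theta> z - y * bt) + bt)"
    unfolding pt_Dv et_def[symmetric] HD_Dv[OF HS] rt_def bt_def tt_def ..
  have f4: "(\<lambda>w. phifield \<epsilon> \<gamma> \<rho> u \<Theta> \<beta> w $ i) = (\<lambda>w. Sfun CARD('n) \<gamma> (\<rho> w) (\<Theta> w) (\<beta> w) * u w $ i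
      + \<epsilon> * (- (Lfun CARD('n) \<gamma> (\<rho> w) (\<Theta> w) (\<beta> w) * G i w) + K i w / \<Theta> w))" for i
    by (rule ext) (simp add: phifield_def Let_def grad_def G_def K_def algebra_simps)
  define Li where "Li i = r i / \<rho> z - nr / 2 * th i / \<Theta> z - y * bb i" for i
  define Si where "Si i = r i * (a1 * L + \<beta> z) + \<rho> z * ((1 - a1 * y) * bb i * L + a1 * (r i / \<rho> z - nr / 2 * th i / \<Theta> z - y * bb i) + bb i)" for i
  have g2i: "Dv (ei i) (\<lambda>w. phifield \<epsilon> \<gamma> \<rho> u \<Theta> \<beta> w $ i) z
      = Si i * uu i + \<rho> z * (a1 * L + \<beta> z) * U i i + \<epsilon> * (- (Li i * G i z + L * g i) + (k i * \<Theta> z - K i z * th i) / (\<Theta> z * \<Theta> z))" for i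
    unfolding f4 HD_Dv[OF HD_add[OF HD_mult[OF HS Hu] HD_mult[OF HD_const HD_add[OF HD_minus[OF HD_mult[OF HL HG]] HD_divide[OF HK B1z(2) tne]]]]]
    by (simp add: Sz Si_def Li_def r_def th_def bb_def uu_def U_def L_def algebra_simps)
  have A1: "(\<Sum>i\<in>UNIV. Si i * uu i) = (a1 * L + \<beta> z) * ru + \<rho> z * ((1 - a1 * y) * L * bu + a1 * (ru / \<rho> z - nr / 2 * thu / \<Theta> z - y * bu) + bu)"
    unfolding Si_def ru_def bu_def thu_def sum_distrib_left sum_distrib_right sum_divide_distrib sum.distrib[symmetric] sum_subtractf[symmetric]
    by (rule sum.cong[OF refl]) (simp add: field_simps)
  have A2: "(\<Sum>i\<in>UNIV. \<rho> z * (a1 * L + \<beta> z) * U i i) = \<rho> z * (a1 * L + \<beta> z) * dv"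
    unfolding dv_def sum_distrib_left ..
  have A3: "(\<Sum>i\<in>UNIV. Li i * G i z) = rG / \<rho> z - nr / 2 * thG / \<Theta> z - y * bG"
    unfolding Li_def rG_def thG_def bG_def sum_distrib_left sum_distrib_right sum_divide_distrib sum.distrib[symmetric] sum_subtractf[symmetric]
    by (rule sum.cong[OF refl]) (simp add: field_simps)
  have A5: "(\<Sum>i\<in>UNIV. (k i * \<Theta> z - K i z * th i) / (\<Theta> z * \<Theta> z)) = sk / \<Theta> z - \<kappa> * th2 / \<Theta> z ^ 2"
    unfolding Kz sk_def th2_def sum_distrib_left sum_distrib_right sum_divide_distrib sum.distrib[symmetric] sum_subtractf[symmetric]
    by (rule sum.cong[OF refl]) (simp add: field_simps power2_eq_square tne)
  have g2: "divg (phifield \<epsilon> \<gamma> \<rho> u \<Theta> \<beta>) z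
     = ((a1 * L + \<beta> z) * ru + \<rho> z * ((1 - a1 * y) * L * bu + a1 * (ru / \<rho> z - nr / 2 * thu / \<Theta> z - y * bu) + bu))
       + \<rho> z * (a1 * L + \<beta> z) * dv
       + \<epsilon> * (- ((rG / \<rho> z - nr / 2 * thG / \<Theta> z - y * bG) + L * sg) + sk / \<Theta> z - \<kappa> * th2 / \<Theta> z ^ 2)"
  proof -
    have "divg (phifield \<epsilon> \<gamma> \<rho> u \<Theta> \<beta>) z = (\<Sum>i\<in>UNIV. Si i * uu i + \<rho> z * (a1 * L + \<beta> z) * U i i
        + \<epsilon> * (- (Li i * G i z + L * g i) + (k i * \<Theta> z - K i z * th i) / (\<Theta> z * \<Theta> z)))"
      unfolding divg_def px_ei g2i ..
    also have "\<dots> = (\<Sum>i\<in>UNIV. Si i * uu i) + (\<Sum>i\<in>UNIV. \<rho> z * (a1 * L + \<beta> z) * U i i)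
        + \<epsilon> * (- ((\<Sum>i\<in>UNIV. Li i * G i z) + L * sg) + (\<Sum>i\<in>UNIV. (k i * \<Theta> z - K i z * th i) / (\<Theta> z * \<Theta> z)))"
      unfolding sg_def sum.distrib sum_distrib_left[symmetric] sum_negf by simp
    finally show ?thesis unfolding A1 A2 A3 A5 by (simp add: algebra_simps)
  qed
  have R1: "\<nu> * (norm (grad (\<lambda>w. chifun \<gamma> (\<rho> w) (\<Theta> w) (\<beta> w)) z))\<^sup>2 = rG / \<rho> z + thG / \<Theta> z - y * bG"
    unfolding normsq grad_def vec_lambda_beta chiz rG_def thG_def bG_def Gz sum_distrib_left sum_divide_distrib sum.distrib[symmetric] sum_subtractf[symmetric]
    by (rule sum.cong[OF refl]) (simp add: field_simps rne tne)
  have R2: "\<kappa> * (norm ((1 / \<Theta> z) *\<^sub>R grad \<Theta> z))\<^sup>2 = \<kappa> * th2 / \<Theta> z ^ 2"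
    unfolding normsq grad_def vector_scaleR_component vec_lambda_beta px_ei th2_def th_def[symmetric] sum_distrib_left sum_divide_distrib
    by (rule sum.cong[OF refl]) (simp add: field_simps power2_eq_square)
  have R3: "ddot (sigmaM u z) (sigmaM u z) = s2" unfolding ddot_def sigz s2_def ..
  have core: "(rt * (a1 * L + \<beta> z) + \<rho> z * ((1 - a1 * y) * bt * L + a1 * (rt / \<rho> z - nr / 2 * tt / \<Theta> z - y * bt) + bt))
       + ((a1 * L + \<beta> z) * ru + \<rho> z * ((1 - a1 * y) * L * bu + a1 * (ru / \<rho> z - nr / 2 * thu / \<Theta> z - y * bu) + bu))
       + \<rho> z * (a1 * L + \<beta> z) * dv
       + \<epsilon> * (- ((rG / \<rho> z - nr / 2 * thG / \<Theta> z - y * bG) + L * sg) + sk / \<Theta> z - \<kappa> * th2 / \<Theta> z ^ 2)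
     = - \<epsilon> * ((rG / \<rho> z + thG / \<Theta> z - y * bG) + \<kappa> * th2 / \<Theta> z ^ 2 + \<mu> / (2 * \<Theta> z) * s2)"
    by (rule core_alg[OF rz tz E2 E1 EK EE[unfolded pt0_def] TU])
  have nn: "\<nu> \<ge> 0" "\<kappa> \<ge> 0" "\<mu> \<ge> 0"
  proof -
    note ip = int_props[OF bz]
    have "avg \<gamma> (\<beta> z) (\<lambda>m. 1 / real m ^ 2) - (avg \<gamma> (\<beta> z) (\<lambda>m. 1 / real m))\<^sup>2 \<ge> 0"
      unfolding avg1_E avg2_E using ip(7) .
    thus "\<nu> \<ge> 0" unfolding \<nu>_def nucoef_def using rz tz by simp
    have "avg \<gamma> (\<beta> z) (\<lambda>m. 1 / real m ^ 2) \<ge> 0" unfolding avg2_E using ip(4,6) by simp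
    thus "\<kappa> \<ge> 0" unfolding \<kappa>_def kappacoef_def using rz tz by simp
    have "avg \<gamma> (\<beta> z) (\<lambda>m. 1 / real m) \<ge> 0" unfolding avg1_E using ip(4,5) by simp
    thus "\<mu> \<ge> 0" unfolding \<mu>_def mucoef_def using rz tz by simp
  qed
  have dd: "ddot (sigmaM u z) (sigmaM u z) \<ge> 0" unfolding ddot_def by (intro sum_nonneg) simp
  have main: "pt (\<lambda>w. Sfun CARD('n) \<gamma> (\<rho> w) (\<Theta> w) (\<beta> w)) z + divg (phifield \<epsilon> \<gamma> \<rho> u \<Theta> \<beta>) z
             = - \<epsilon> * (\<nu> * (norm (grad (\<lambda>w. chifun \<gamma> (\<rho> w) (\<Theta> w) (\<beta> w)) z))\<^sup>2
                        + \<kappa> * (norm ((1 / \<Theta> z) *\<^sub>R grad \<Theta> z))\<^sup>2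
                        + \<mu> / (2 * \<Theta> z) * ddot (sigmaM u z) (sigmaM u z))"
    unfolding g1 g2 R1 R2 R3 using core by (simp add: algebra_simps)
  have ineq: "- \<epsilon> * (\<nu> * (norm (grad (\<lambda>w. chifun \<gamma> (\<rho> w) (\<Theta> w) (\<beta> w)) z))\<^sup>2
                        + \<kappa> * (norm ((1 / \<Theta> z) *\<^sub>R grad \<Theta> z))\<^sup>2
                        + \<mu> / (2 * \<Theta> z) * ddot (sigmaM u z) (sigmaM u z)) \<le> 0"
    using nn dd eps tz by (simp add: mult_nonneg_nonneg add_nonneg_nonneg)
  show "pt (\<lambda>w. Sfun CARD('n) \<gamma> (\<rho> w) (\<Theta> w) (\<beta> w)) z + divg (phifield \<epsilon> \<gamma> \<rho> u \<Theta> \<beta>) z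
             = - \<epsilon> * (nucoef \<gamma> (\<rho> z) (\<Theta> z) (\<beta> z) * (norm (grad (\<lambda>w. chifun \<gamma> (\<rho> w) (\<Theta> w) (\<beta> w)) z))\<^sup>2
                        + kappacoef CARD('n) \<gamma> (\<rho> z) (\<Theta> z) (\<beta> z) * (norm ((1 / \<Theta> z) *\<^sub>R grad \<Theta> z))\<^sup>2
                        + mucoef \<gamma> (\<rho> z) (\<Theta> z) (\<beta> z) / (2 * \<Theta> z) * ddot (sigmaM u z) (sigmaM u z))
         \<and> - \<epsilon> * (nucoef \<gamma> (\<rho> z) (\<Theta> z) (\<beta> z) * (norm (grad (\<lambda>w. chifun \<gamma> (\<rho> w) (\<Theta> w) (\<beta> w)) z))\<^sup>2
                   + kappacoef CARD('n) \<gamma> (\<rho> z) (\<Theta> z) (\<beta> z) * (norm ((1 / \<Theta> z) *\<^sub>R grad \<Theta> z))\<^sup>2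
                   + mucoef \<gamma> (\<rho> z) (\<Theta> z) (\<beta> z) / (2 * \<Theta> z) * ddot (sigmaM u z) (sigmaM u z)) \<le> 0"
    using main ineq unfolding \<nu>_def \<kappa>_def \<mu>_def by (rule conjI)



qed

end
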